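(* Let $0<\lambda<\mu$ and put $\nu=\lambda/\mu<1$. Then the normal state \[ \rho=(1-\nu^2)\sum_{n\ge0}\nu^{2n}|e_n\rangle\langle e_n| \] is invariant for the quantum Markov semigroup $\mathcal T$, i.e. $\mathcal T_{*t}(\rho)=\rho$ for all $t\ge0$ (equivalently $\rho$ lies in the domain of the generator $\mathcal L_*$ of the predual semigroup and $\mathcal L_*(\rho)=0$).
   Context: Let $\mathsf h=\ell^2(\mathbb N)$ with canonical orthonormal basis $(e_n)_{n\ge0}$ and let $N$ be the number operator, $Ne_n=ne_n$. Fix $r>0$ and set $\omega_n=n(n+r-1)$ for $n\ge0$. On $\mathrm{Dom}(N)=\{u=\sum_n u_ne_n:\sum_n n^2|u_n|^2<\infty\}$ define $Be_n=\omega_n^{1/2}e_{n-1}$ for $n\ge1$, $Be_0=0$, and $B^+e_n=\omega_{n+1}^{1/2}e_{n+1}$. Fix real numbers $\lambda,\mu>0$ and $\zeta^+,\zeta^-$. Let $G$ be the operator with domain $\mathrm{Dom}(N^2)$ given by $Ge_n=-\big((\tfrac{\lambda^2}{2}+i\zeta^+)\omega_{n+1}+(\tfrac{\mu^2}{2}+i\zeta^-)\omega_n\big)e_n$ (i.e. $G=-\frac{\lambda^2}{2}BB^+-\frac{\mu^2}{2}B^+B-i(\zeta^+BB^++\zeta^-B^+B)$), generating the contraction semigroup $P_t=e^{tG}$, and let $L_1=\mu B$, $L_2=\lambda B^+$. The quantum Markov semigroup $\mathcal T=(\mathcal T_t)_{t\ge0}$ on $\mathcal B(\mathsf h)$ is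 the minimal quantum dynamical semigroup associated with $G,L_1,L_2$, i.e. the minimal solution of $\langle v,\mathcal T_t(x)u\rangle=\langle P_tv,xP_tu\rangle+\sum_{\ell=1}^2\int_0^t\langle L_\ell P_{t-s}v,\mathcal T_s(x)L_\ell P_{t-s}u\rangle\,ds$ for $u,v\in\mathrm{Dom}(G)$, $x\in\mathcal B(\mathsf h)$; its formal generator is $\mathcal L(x)=-\frac{\lambda^2}{2}(BB^+x-2BxB^++xBB^+)-\frac{\mu^2}{2}(B^+Bx-2B^+xB+xB^+B)+i[\zeta^+BB^++\zeta^-B^+B,x]$. It is identity preserving when $\lambda\le\mu$. $\mathcal T_{*}=(\mathcal T_{*t})_{t\ge0}$ denotes the predual semigroup acting on trace-class operators. *)

theory Defs
  imports "HOL-Analysis.Analysis"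
begin

text \<open>Concrete model of h = l2(N): vectors are functions nat => complex
  (coordinates w.r.t. the canonical basis e_n); operators are maps on such
  functions, only their behaviour on square-summable vectors matters.\<close>

type_synonym vec = "nat \<Rightarrow> complex"
type_synonym op = "vec \<Rightarrow> vec"

definition l2 :: "vec \<Rightarrow> bool" where
  "l2 u \<longleftrightarrow> summable (\<lambda>n. (cmod (u n))^2)"

definition inn :: "vec \<Rightarrow> vec \<Rightarrow> complex" where
  "inn v u = (\<Sum>n. cnj (v n) * u n)"

definition basis :: "nat \<Rightarrow> vec" where
  "basis n = (\<lambda>k. if k = n then 1 else 0)"

definition bop :: "op \<Rightarrow> bool" where
  "bop x \<longleftrightarrow>
     (\<forall>u. l2 u \<longrightarrow> l2 (x u)) \<and>
     (\<forall>u v. l2 u \<longrightarrow> l2 v \<longrightarrow> x (\<lambda>k. u k + v k) = (\<lambda>k. x u k + x v k)) \<and>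
     (\<forall>c u. l2 u \<longrightarrow> x (\<lambda>k. c * u k) = (\<lambda>k. c * x u k)) \<and>
     (\<exists>C. \<forall>u. l2 u \<longrightarrow> (\<Sum>n. (cmod (x u n))^2) \<le> C * (\<Sum>n. (cmod (u n))^2))"

definition opos :: "op \<Rightarrow> bool" where
  "opos x \<longleftrightarrow> (\<forall>u. l2 u \<longrightarrow> Im (inn u (x u)) = 0 \<and> 0 \<le> Re (inn u (x u)))"

definition ople :: "op \<Rightarrow> op \<Rightarrow> bool" where
  "ople x y \<longleftrightarrow> opos (\<lambda>u k. y u k - x u k)"

definition omega :: "real \<Rightarrow> nat \<Rightarrow> real" where
  "omega r n = real n * (real n + r - 1)"

text \<open>B e_n = omega_n^(1/2) e_(n-1), B^+ e_n = omega_(n+1)^(1/2) e_(n+1), in coordinates.\<close>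
definition Bop :: "real \<Rightarrow> op" where
  "Bop r u = (\<lambda>k. complex_of_real (sqrt (omega r (Suc k))) * u (Suc k))"

definition Bplus :: "real \<Rightarrow> op" where
  "Bplus r u = (\<lambda>k. if k = 0 then 0 else complex_of_real (sqrt (omega r k)) * u (k - 1))"

text \<open>Eigenvalues of G: G e_n = gdiag n e_n.\<close>
definition gdiag :: "real \<Rightarrow> real \<Rightarrow> real \<Rightarrow> real \<Rightarrow> real \<Rightarrow> nat \<Rightarrow> complex" where
  "gdiag r lam mu zp zm n =
     - ((complex_of_real (lam^2/2) + \<i> * complex_of_real zp) * complex_of_real (omega r (Suc n))
        + (complex_of_real (mu^2/2) + \<i> * complex_of_real zm) * complex_of_real (omega r n))"

definition Psg :: "real \<Rightarrow> real \<Rightarrow> real \<Rightarrow> real \<Rightarrow> real \<Rightarrow> real \<Rightarrow> op" where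
  "Psg r lam mu zp zm t u = (\<lambda>k. exp (complex_of_real t * gdiag r lam mu zp zm k) * u k)"

text \<open>Dom(G) = Dom(N^2).\<close>
definition domG :: "vec \<Rightarrow> bool" where
  "domG u \<longleftrightarrow> l2 u \<and> summable (\<lambda>n. (real n)^4 * (cmod (u n))^2)"

definition L1 :: "real \<Rightarrow> real \<Rightarrow> op" where
  "L1 r mu u = (\<lambda>k. complex_of_real mu * Bop r u k)"

definition L2 :: "real \<Rightarrow> real \<Rightarrow> op" where
  "L2 r lam u = (\<lambda>k. complex_of_real lam * Bplus r u k)"

definition qds_solution :: "real \<Rightarrow> real \<Rightarrow> real \<Rightarrow> real \<Rightarrow> real \<Rightarrow> (real \<Rightarrow> op \<Rightarrow> op) \<Rightarrow> bool" where
  "qds_solution r lam mu zp zm T \<longleftrightarrow>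
    (\<forall>t\<ge>0. \<forall>x. bop x \<longrightarrow> bop (T t x)) \<and>
    (\<forall>t\<ge>0. \<forall>x. bop x \<longrightarrow> opos x \<longrightarrow> opos (T t x)) \<and>
    (\<forall>t\<ge>0. \<forall>x. bop x \<longrightarrow> (\<forall>u v. domG u \<longrightarrow> domG v \<longrightarrow>
       (\<lambda>s. inn (L1 r mu (Psg r lam mu zp zm (t - s) v)) (T s x (L1 r mu (Psg r lam mu zp zm (t - s) u))))
          integrable_on {0..t} \<and>
       (\<lambda>s. inn (L2 r lam (Psg r lam mu zp zm (t - s) v)) (T s x (L2 r lam (Psg r lam mu zp zm (t - s) u))))
          integrable_on {0..t} \<and>
       inn v (T t x u) =
         inn (Psg r lam mu zp zm t v) (x (Psg r lam mu zp zm t u))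
         + integral {0..t} (\<lambda>s. inn (L1 r mu (Psg r lam mu zp zm (t - s) v)) (T s x (L1 r mu (Psg r lam mu zp zm (t - s) u))))
         + integral {0..t} (\<lambda>s. inn (L2 r lam (Psg r lam mu zp zm (t - s) v)) (T s x (L2 r lam (Psg r lam mu zp zm (t - s) u))))))"

definition minimal_qds :: "real \<Rightarrow> real \<Rightarrow> real \<Rightarrow> real \<Rightarrow> real \<Rightarrow> (real \<Rightarrow> op \<Rightarrow> op) \<Rightarrow> bool" where
  "minimal_qds r lam mu zp zm T \<longleftrightarrow>
    qds_solution r lam mu zp zm T \<and>
    (\<forall>t\<ge>0. \<forall>x y. bop x \<longrightarrow> bop y \<longrightarrow> (\<forall>u. l2 u \<longrightarrow>
        T t (\<lambda>w k. x w k + y w k) u = (\<lambda>k. T t x u k + T t y u k))) \<and>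
    (\<forall>t\<ge>0. \<forall>x c. bop x \<longrightarrow> (\<forall>u. l2 u \<longrightarrow>
        T t (\<lambda>w k. c * x w k) u = (\<lambda>k. c * T t x u k))) \<and>
    (\<forall>T'. qds_solution r lam mu zp zm T' \<longrightarrow>
        (\<forall>t\<ge>0. \<forall>x. bop x \<longrightarrow> opos x \<longrightarrow> ople (T t x) (T' t x)))"

text \<open>tr(rho y) for rho = (1 - nu^2) sum_n nu^(2n) |e_n><e_n|.\<close>
definition tr_rho :: "real \<Rightarrow> op \<Rightarrow> complex" where
  "tr_rho nu y = (\<Sum>n. complex_of_real ((1 - nu^2) * nu^(2*n)) * inn (basis n) (y (basis n)))"

end

theory Submission
  imports Defs
begin



definition nrm :: "vec \<Rightarrow> real" where "nrm u = (\<Sum>n. (cmod (u n))^2)"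
definition trunc :: "nat \<Rightarrow> vec \<Rightarrow> vec" where "trunc N u = (\<lambda>k. if k < N then u k else 0)"

lemma nrm_nonneg: "l2 u \<Longrightarrow> nrm u \<ge> 0"
  unfolding nrm_def l2_def by (auto intro: suminf_nonneg)

lemmas suminf_cnj = bounded_linear.suminf[OF bounded_linear_cnj]

lemma l2_add: assumes "l2 u" "l2 v" shows "l2 (\<lambda>k. u k + v k)"
proof -
  have S: "summable (\<lambda>n. 2 * (cmod (u n))^2 + 2 * (cmod (v n))^2)"
    using assms unfolding l2_def by (intro summable_add summable_mult) auto
  have B: "norm ((cmod (u n + v n))^2) \<le> 2 * (cmod (u n))^2 + 2 * (cmod (v n))^2" for n
  proof -
    have "cmod (u n + v n) \<le> cmod (u n) + cmod (v n)" by (rule norm_triangle_ineq)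
    hence "(cmod (u n + v n))^2 \<le> (cmod (u n) + cmod (v n))^2" by (simp add: power_mono)
    also have "\<dots> \<le> 2 * (cmod (u n))^2 + 2 * (cmod (v n))^2"
      unfolding power2_sum using sum_squares_bound[of "cmod (u n)" "cmod (v n)"] by linarith
    finally show ?thesis by simp
  qed
  have "summable (\<lambda>n. (cmod (u n + v n))^2)"
    by (rule summable_comparison_test'[OF S, where N=0]) (rule B)
  thus ?thesis unfolding l2_def .
qed

lemma l2_scale: assumes "l2 u" shows "l2 (\<lambda>k. c * u k)"
  using summable_mult[OF assms[unfolded l2_def], of "(cmod c)^2"]
  unfolding l2_def by (simp add: norm_mult power_mult_distrib)

lemma l2_basis: "l2 (basis m)"
proof -
  have "summable (\<lambda>n. (cmod (basis m n))^2)"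
    by (rule summable_finite[of "{m}"]) (auto simp: basis_def)
  thus ?thesis by (simp add: l2_def)
qed

lemma l2_zero: "l2 (\<lambda>k. 0)"
  by (simp add: l2_def)

lemma l2_trunc: "l2 (trunc N u)"
  unfolding l2_def trunc_def by (rule summable_finite[of "{..<N}"]) auto

lemma summable_prod_norm: assumes "l2 u" "l2 v" shows "summable (\<lambda>n. cmod (u n) * cmod (v n))"
proof -
  have S: "summable (\<lambda>n. (cmod (u n))^2 + (cmod (v n))^2)"
    using assms unfolding l2_def by (intro summable_add) auto
  have B: "norm (cmod (u n) * cmod (v n)) \<le> (cmod (u n))^2 + (cmod (v n))^2" for n
  proof -
    have "2 * (cmod (u n) * cmod (v n)) \<le> (cmod (u n))^2 + (cmod (v n))^2"
      using sum_squares_bound[of "cmod (u n)" "cmod (v n)"] by simp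
    moreover have "0 \<le> cmod (u n) * cmod (v n)" by simp
    moreover have "norm (cmod (u n) * cmod (v n)) = cmod (u n) * cmod (v n)" by simp
    ultimately show ?thesis by linarith
  qed
  show ?thesis by (rule summable_comparison_test'[OF S, where N=0]) (rule B)
qed

lemma summable_inn: assumes "l2 u" "l2 v" shows "summable (\<lambda>n. cnj (u n) * v n)"
  by (rule summable_norm_cancel) (use summable_prod_norm[OF assms] in \<open>simp add: norm_mult\<close>)

lemma summable_inn_norm: assumes "l2 u" "l2 v" shows "summable (\<lambda>n. norm (cnj (u n) * v n))"
  using summable_prod_norm[OF assms] by (simp add: norm_mult)

lemma cs_sum: assumes "l2 u" "l2 v" shows "(\<Sum>n. cmod (u n) * cmod (v n)) \<le> sqrt (nrm u) * sqrt (nrm v)"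
proof (rule suminf_le_const)
  show "summable (\<lambda>n. cmod (u n) * cmod (v n))" using summable_prod_norm[OF assms] .
  fix N
  have "(\<Sum>n<N. cmod (u n) * cmod (v n)) = (\<Sum>n<N. \<bar>cmod (u n)\<bar> * \<bar>cmod (v n)\<bar>)" by simp
  also have "\<dots> \<le> L2_set (\<lambda>n. cmod (u n)) {..<N} * L2_set (\<lambda>n. cmod (v n)) {..<N}"
    by (rule L2_set_mult_ineq)
  also have "\<dots> \<le> sqrt (nrm u) * sqrt (nrm v)"
    unfolding L2_set_def nrm_def
    using assms unfolding l2_def
    by (intro mult_mono real_sqrt_le_mono sum_le_suminf) (auto intro!: suminf_nonneg sum_nonneg)
  finally show "(\<Sum>n<N. cmod (u n) * cmod (v n)) \<le> sqrt (nrm u) * sqrt (nrm v)" .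
qed

lemma cs: assumes "l2 u" "l2 v" shows "cmod (inn u v) \<le> sqrt (nrm u) * sqrt (nrm v)"
proof -
  have "cmod (inn u v) \<le> (\<Sum>n. norm (cnj (u n) * v n))"
    unfolding inn_def by (rule summable_norm[OF summable_inn_norm[OF assms]])
  also have "\<dots> = (\<Sum>n. cmod (u n) * cmod (v n))" by (simp add: norm_mult)
  also have "\<dots> \<le> sqrt (nrm u) * sqrt (nrm v)" by (rule cs_sum[OF assms])
  finally show ?thesis .
qed

lemma inn_add: assumes "l2 w" "l2 u" "l2 v" shows "inn w (\<lambda>k. u k + v k) = inn w u + inn w v"
  unfolding inn_def using summable_inn[OF assms(1,2)] summable_inn[OF assms(1,3)]
  by (simp add: distrib_left suminf_add)

lemma inn_scale: assumes "l2 w" "l2 u" shows "inn w (\<lambda>k. c * u k) = c * inn w u"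
  unfolding inn_def using summable_inn[OF assms]
  by (simp add: suminf_mult[symmetric] mult.left_commute)

lemma inn_cnj: assumes "l2 w" "l2 u" shows "inn u w = cnj (inn w u)"
  unfolding inn_def using summable_inn[OF assms]
  by (simp add: suminf_cnj mult.commute)

lemma inn_basis_left: "inn (basis m) y = y m"
proof -
  have "inn (basis m) y = (\<Sum>n\<in>{m}. cnj (basis m n) * y n)"
    unfolding inn_def by (rule suminf_finite) (auto simp: basis_def)
  thus ?thesis by (simp add: basis_def)
qed

lemma cnj_mult_self: "cnj z * z = complex_of_real ((cmod z)^2)"
  by (metis complex_norm_square mult.commute of_real_power)

lemma inn_self: assumes "l2 u" shows "inn u u = of_real (nrm u)"
proof -
  have "inn u u = (\<Sum>n. complex_of_real ((cmod (u n))^2))"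
    unfolding inn_def by (simp only: cnj_mult_self)
  also have "\<dots> = of_real (nrm u)"
    unfolding nrm_def using assms unfolding l2_def by (rule suminf_of_real[symmetric])
  finally show ?thesis .
qed

lemma nrm_tail: assumes "l2 u" shows "(\<lambda>N. nrm (\<lambda>k. u k - trunc N u k)) \<longlonglongrightarrow> 0"
proof -
  define f where "f = (\<lambda>n. (cmod (u n))^2)"
  have s: "summable f" using assms by (simp add: l2_def f_def)
  have eq: "nrm (\<lambda>k. u k - trunc N u k) = nrm u - (\<Sum>n<N. f n)" for N
  proof -
    define g where "g = (\<lambda>n. (cmod (u n - trunc N u n))^2)"
    have g: "g n = (if n < N then 0 else f n)" for n by (simp add: g_def f_def trunc_def)
    have sg: "summable g"
      by (rule summable_comparison_test'[OF s, where N=0]) (auto simp: g f_def)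
    have "suminf g = (\<Sum>n. g (n + N)) + sum g {..<N}" by (rule suminf_split_initial_segment[OF sg])
    moreover have "suminf f = (\<Sum>n. f (n + N)) + sum f {..<N}" by (rule suminf_split_initial_segment[OF s])
    moreover have "(\<lambda>n. g (n + N)) = (\<lambda>n. f (n + N))" by (auto simp: g)
    moreover have "sum g {..<N} = 0" by (auto simp: g)
    ultimately show ?thesis unfolding nrm_def by (simp add: g_def f_def)
  qed
  have "(\<lambda>N. (\<Sum>n<N. f n)) \<longlonglongrightarrow> nrm u"
    unfolding nrm_def f_def[symmetric] by (rule summable_LIMSEQ[OF s])
  hence "(\<lambda>N. nrm u - (\<Sum>n<N. f n)) \<longlonglongrightarrow> nrm u - nrm u"
    by (intro tendsto_diff) auto
  thus ?thesis by (simp add: eq)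
qed


lemma bop_l2: "bop x \<Longrightarrow> l2 u \<Longrightarrow> l2 (x u)" by (simp add: bop_def)
lemma bop_add: "bop x \<Longrightarrow> l2 u \<Longrightarrow> l2 v \<Longrightarrow> x (\<lambda>k. u k + v k) = (\<lambda>k. x u k + x v k)" by (simp add: bop_def)
lemma bop_scale: "bop x \<Longrightarrow> l2 u \<Longrightarrow> x (\<lambda>k. c * u k) = (\<lambda>k. c * x u k)" by (simp add: bop_def)
lemma bop_bound: assumes "bop x" obtains C where "C \<ge> 0" "\<And>u. l2 u \<Longrightarrow> nrm (x u) \<le> C * nrm u"
proof -
  obtain C where C: "\<And>u. l2 u \<Longrightarrow> nrm (x u) \<le> C * nrm u" using assms unfolding bop_def nrm_def by blast
  have "nrm (x u) \<le> max C 0 * nrm u" if "l2 u" for u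
    using C[OF that] nrm_nonneg[OF that] by (smt (z3) mult_right_mono)
  thus ?thesis using that[of "max C 0"] by simp
qed

lemma bop_diff: assumes "bop x" "l2 u" "l2 v" shows "x (\<lambda>k. u k - v k) = (\<lambda>k. x u k - x v k)"
proof -
  have "x (\<lambda>k. u k - v k) = x (\<lambda>k. u k + (\<lambda>k. (-1) * v k) k)" by simp
  also have "\<dots> = (\<lambda>k. x u k + x (\<lambda>k. (-1) * v k) k)"
    by (rule bop_add[OF assms(1,2) l2_scale[OF assms(3)]])
  also have "\<dots> = (\<lambda>k. x u k - x v k)" using bop_scale[OF assms(1,3), of "-1"] by simp
  finally show ?thesis .
qed

lemma bop_zero: assumes "bop x" shows "x (\<lambda>k. 0) = (\<lambda>k. 0)"
  using bop_scale[OF assms l2_zero, of 0] by simp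

lemma bop_trunc: assumes "bop x" shows "x (trunc N v) = (\<lambda>k. \<Sum>j<N. v j * x (basis j) k)"
proof (induction N)
  case 0
  have "trunc 0 v = (\<lambda>k. 0)" by (simp add: trunc_def)
  thus ?case using bop_zero[OF assms] by simp
next
  case (Suc N)
  have "trunc (Suc N) v = (\<lambda>k. trunc N v k + (\<lambda>k. v N * basis N k) k)"
    by (auto simp: trunc_def basis_def less_Suc_eq fun_eq_iff)
  hence "x (trunc (Suc N) v) = (\<lambda>k. x (trunc N v) k + x (\<lambda>k. v N * basis N k) k)"
    using bop_add[OF assms l2_trunc l2_scale[OF l2_basis]] by simp
  also have "\<dots> = (\<lambda>k. (\<Sum>j<N. v j * x (basis j) k) + v N * x (basis N) k)"
    using Suc bop_scale[OF assms l2_basis] by simp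
  finally show ?case by simp
qed

lemma inn_diff: assumes "l2 w" "l2 u" "l2 v" shows "inn w (\<lambda>k. u k - v k) = inn w u - inn w v"
  unfolding inn_def using summable_inn[OF assms(1,2)] summable_inn[OF assms(1,3)]
  by (simp add: right_diff_distrib suminf_diff)

lemma inn_sum: assumes "l2 w" "finite J" "\<And>j. j \<in> J \<Longrightarrow> l2 (f j)"
  shows "inn w (\<lambda>k. \<Sum>j\<in>J. c j * f j k) = (\<Sum>j\<in>J. c j * inn w (f j))"
proof -
  have "inn w (\<lambda>k. \<Sum>j\<in>J. c j * f j k) = (\<Sum>k. \<Sum>j\<in>J. c j * (cnj (w k) * f j k))"
    unfolding inn_def by (simp add: sum_distrib_left mult.left_commute)
  also have "\<dots> = (\<Sum>j\<in>J. \<Sum>k. c j * (cnj (w k) * f j k))"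
    by (rule suminf_sum) (use assms summable_inn in \<open>auto intro: summable_mult\<close>)
  also have "\<dots> = (\<Sum>j\<in>J. c j * inn w (f j))"
    unfolding inn_def by (intro sum.cong refl suminf_mult summable_inn assms) auto
  finally show ?thesis .
qed

lemma inn_trunc: "inn a (trunc N v) = (\<Sum>j<N. cnj (a j) * v j)"
  unfolding inn_def by (subst suminf_finite[of "{..<N}"]) (auto simp: trunc_def)

lemma nrm_trunc: "nrm (trunc N v) = (\<Sum>j<N. (cmod (v j))^2)"
  unfolding nrm_def by (subst suminf_finite[of "{..<N}"]) (auto simp: trunc_def)

definition adj :: "op \<Rightarrow> op" where "adj x w = (\<lambda>j. inn (x (basis j)) w)"

lemma adj_trunc: assumes "bop x" "l2 w"
  shows "inn (adj x w) (trunc N v) = inn w (x (trunc N v))"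
proof -
  have "inn (adj x w) (trunc N v) = (\<Sum>j<N. cnj (inn (x (basis j)) w) * v j)"
    by (simp add: inn_trunc adj_def)
  also have "\<dots> = (\<Sum>j<N. v j * inn w (x (basis j)))"
    using inn_cnj[OF bop_l2[OF assms(1) l2_basis] assms(2)] by (simp add: mult.commute)
  also have "\<dots> = inn w (\<lambda>k. \<Sum>j<N. v j * x (basis j) k)"
    by (rule inn_sum[symmetric]) (use assms bop_l2 l2_basis in auto)
  finally show ?thesis by (simp add: bop_trunc[OF assms(1)])
qed

lemma adj_l2: assumes "bop x" "l2 w" "C \<ge> 0" "\<And>u. l2 u \<Longrightarrow> nrm (x u) \<le> C * nrm u"
  shows "l2 (adj x w)" "nrm (adj x w) \<le> C * nrm w"
proof -
  define a where "a = adj x w"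
  have part: "(\<Sum>j<N. (cmod (a j))^2) \<le> C * nrm w" for N
  proof -
    define S where "S = (\<Sum>j<N. (cmod (a j))^2)"
    have S0: "S \<ge> 0" unfolding S_def by (simp add: sum_nonneg)
    have "inn a (trunc N a) = (\<Sum>j<N. complex_of_real ((cmod (a j))^2))"
      by (simp add: inn_trunc cnj_mult_self)
    hence e1: "inn a (trunc N a) = of_real S" by (simp add: S_def)
    have e2: "inn a (trunc N a) = inn w (x (trunc N a))" unfolding a_def by (rule adj_trunc[OF assms(1,2)])
    have "S = cmod (inn w (x (trunc N a)))" using e1 e2 S0 by (metis norm_of_real abs_of_nonneg)
    also have "\<dots> \<le> sqrt (nrm w) * sqrt (nrm (x (trunc N a)))"
      by (rule cs[OF assms(2) bop_l2[OF assms(1) l2_trunc]])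
    also have "\<dots> \<le> sqrt (nrm w) * sqrt (C * S)"
      using assms(4)[OF l2_trunc, of N a] nrm_nonneg[OF assms(2)] unfolding nrm_trunc S_def[symmetric]
      by (intro mult_left_mono real_sqrt_le_mono) auto
    finally have S1: "S \<le> sqrt (nrm w * C * S)" by (simp add: real_sqrt_mult mult.assoc)
    have P: "0 \<le> nrm w * C * S" using nrm_nonneg[OF assms(2)] assms(3) S0 by simp
    have "S^2 \<le> (sqrt (nrm w * C * S))^2" by (rule power_mono[OF S1 S0])
    also have "\<dots> = nrm w * C * S" using P by simp
    finally have "S * S \<le> (C * nrm w) * S" by (simp add: power2_eq_square mult_ac)
    hence "S \<le> C * nrm w \<or> S = 0" using S0 by (auto simp: mult_le_cancel_right)
    thus ?thesis unfolding S_def[symmetric] using P assms(3) nrm_nonneg[OF assms(2)] by auto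
  qed
  have sm: "summable (\<lambda>j. (cmod (a j))^2)"
    by (rule summableI_nonneg_bounded[where x="C * nrm w"]) (use part in auto)
  thus "l2 (adj x w)" unfolding a_def l2_def .
  show "nrm (adj x w) \<le> C * nrm w"
  proof -
    have "(\<Sum>n. (cmod (a n))^2) \<le> C * nrm w" by (rule suminf_le_const[OF sm part])
    thus ?thesis unfolding a_def by (simp add: nrm_def[of "adj x w"])
  qed
qed

lemma tendsto_by_bound: assumes "\<And>N. norm (f N - L) \<le> h N" "h \<longlonglongrightarrow> 0"
  shows "f \<longlonglongrightarrow> (L::complex)"
proof -
  have "(\<lambda>N. f N - L) \<longlonglongrightarrow> 0"
    by (rule Lim_null_comparison[OF _ assms(2)]) (use assms(1) in auto)
  thus ?thesis by (simp add: LIM_zero_iff)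
qed

lemma adj_inn: assumes "bop x" "l2 w" "l2 v"
  shows "inn (adj x w) v = inn w (x v)"
proof -
  obtain C where C: "C \<ge> 0" "\<And>u. l2 u \<Longrightarrow> nrm (x u) \<le> C * nrm u" using bop_bound[OF assms(1)] by blast
  define a where "a = adj x w"
  have la: "l2 a" unfolding a_def by (rule adj_l2(1)[OF assms(1,2) C])
  define e where "e = (\<lambda>N. nrm (\<lambda>k. v k - trunc N v k))"
  have e0: "e \<longlonglongrightarrow> 0" unfolding e_def by (rule nrm_tail[OF assms(3)])
  have le: "l2 (\<lambda>k. v k - trunc N v k)" for N
    using l2_add[OF assms(3) l2_scale[OF l2_trunc, of "-1" N v]] by simp
  have t1: "(\<lambda>N. inn a (trunc N v)) \<longlonglongrightarrow> inn a v"
  proof (rule tendsto_by_bound)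
    fix N
    have "norm (inn a (trunc N v) - inn a v) = norm (inn a (\<lambda>k. v k - trunc N v k))"
      using inn_diff[OF la assms(3) l2_trunc] by (simp add: norm_minus_commute)
    also have "\<dots> \<le> sqrt (nrm a) * sqrt (e N)" unfolding e_def by (rule cs[OF la le])
    finally show "norm (inn a (trunc N v) - inn a v) \<le> sqrt (nrm a) * sqrt (e N)" .
  next
    show "(\<lambda>N. sqrt (nrm a) * sqrt (e N)) \<longlonglongrightarrow> 0"
      using tendsto_mult_left[OF tendsto_real_sqrt[OF e0], of "sqrt (nrm a)"] by simp
  qed
  have t2: "(\<lambda>N. inn w (x (trunc N v))) \<longlonglongrightarrow> inn w (x v)"
  proof (rule tendsto_by_bound)
    fix N
    have "norm (inn w (x (trunc N v)) - inn w (x v)) = norm (inn w (x (\<lambda>k. v k - trunc N v k)))"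
      using inn_diff[OF assms(2) bop_l2[OF assms(1) assms(3)] bop_l2[OF assms(1) l2_trunc]]
        bop_diff[OF assms(1,3) l2_trunc] by (simp add: norm_minus_commute)
    also have "\<dots> \<le> sqrt (nrm w) * sqrt (nrm (x (\<lambda>k. v k - trunc N v k)))"
      by (rule cs[OF assms(2) bop_l2[OF assms(1) le]])
    also have "\<dots> \<le> sqrt (nrm w) * sqrt (C * e N)"
      unfolding e_def using nrm_nonneg[OF assms(2)] by (intro mult_left_mono real_sqrt_le_mono C(2) le) auto
    finally show "norm (inn w (x (trunc N v)) - inn w (x v)) \<le> sqrt (nrm w) * sqrt (C * e N)" .
  next
    show "(\<lambda>N. sqrt (nrm w) * sqrt (C * e N)) \<longlonglongrightarrow> 0"
      using tendsto_mult_left[OF tendsto_real_sqrt[OF tendsto_mult_left[OF e0, of C]], of "sqrt (nrm w)"] by simp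
  qed
  have "(\<lambda>N. inn a (trunc N v)) = (\<lambda>N. inn w (x (trunc N v)))"
    unfolding a_def using adj_trunc[OF assms(1,2)] by blast
  with t1 t2 show ?thesis unfolding a_def using LIMSEQ_unique by metis
qed

lemma adj_bop: assumes "bop x" shows "bop (adj x)"
proof -
  obtain C where C: "C \<ge> 0" "\<And>u. l2 u \<Longrightarrow> nrm (x u) \<le> C * nrm u" using bop_bound[OF assms(1)] by blast
  have xe: "l2 (x (basis j))" for j by (rule bop_l2[OF assms l2_basis])
  show ?thesis unfolding bop_def
  proof (intro conjI allI impI)
    fix u assume "l2 u" thus "l2 (adj x u)" by (rule adj_l2(1)[OF assms _ C])
  next
    fix u v assume "l2 u" "l2 v"
    thus "adj x (\<lambda>k. u k + v k) = (\<lambda>k. adj x u k + adj x v k)"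
      unfolding adj_def using inn_add[OF xe] by auto
  next
    fix c u assume "l2 u"
    thus "adj x (\<lambda>k. c * u k) = (\<lambda>k. c * adj x u k)"
      unfolding adj_def using inn_scale[OF xe] by auto
  next
    show "\<exists>C. \<forall>u. l2 u \<longrightarrow> (\<Sum>n. (cmod (adj x u n))\<^sup>2) \<le> C * (\<Sum>n. (cmod (u n))\<^sup>2)"
      using adj_l2(2)[OF assms _ C] unfolding nrm_def by blast
  qed
qed

lemma adj_self: assumes "bop x" "l2 u" shows "inn u (adj x u) = cnj (inn u (x u))"
proof -
  have la: "l2 (adj x u)" using adj_bop[OF assms(1)] assms(2) by (rule bop_l2)
  have "inn u (adj x u) = cnj (inn (adj x u) u)" by (rule inn_cnj[OF la assms(2)])
  also have "\<dots> = cnj (inn u (x u))" by (simp add: adj_inn[OF assms(1,2,2)])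
  finally show ?thesis .
qed




lemma omega_nonneg: "r > 0 \<Longrightarrow> omega r k \<ge> 0"
  unfolding omega_def by (cases k) auto

lemma omega_Suc_pos: "r > 0 \<Longrightarrow> omega r (Suc k) > 0"
  unfolding omega_def by (auto intro!: mult_pos_pos)

lemma omega_zero[simp]: "omega r 0 = 0" by (simp add: omega_def)

lemma omega_le: assumes "r > 0" shows "omega r k \<le> (1 + r) * ((real k)^2 + 1)"
proof -
  have "real k \<le> (real k)^2 + 1"
    by (cases "k = 0") (auto simp: power2_eq_square intro: order_trans[of _ "real k * real k"])
  hence "r * real k \<le> r * ((real k)^2 + 1)" using assms by (intro mult_left_mono) auto
  thus ?thesis unfolding omega_def by (simp add: algebra_simps power2_eq_square)
qed

definition AA :: "real \<Rightarrow> real \<Rightarrow> real \<Rightarrow> nat \<Rightarrow> real" where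
  "AA r lam mu k = lam^2 * omega r (Suc k) + mu^2 * omega r k"

lemma AA_pos: "r > 0 \<Longrightarrow> lam > 0 \<Longrightarrow> AA r lam mu k > 0"
  unfolding AA_def using omega_Suc_pos[of r k] omega_nonneg[of r k]
  by (intro add_pos_nonneg mult_pos_pos) auto


lemma expsq: "cnj (exp (complex_of_real s * gdiag r lam mu zp zm k)) * exp (complex_of_real s * gdiag r lam mu zp zm k)
   = complex_of_real (exp (- s * AA r lam mu k))"
proof -
  have "Re (complex_of_real s * gdiag r lam mu zp zm k) = - s * AA r lam mu k / 2"
    by (simp add: gdiag_def AA_def algebra_simps)
  hence "(cmod (exp (complex_of_real s * gdiag r lam mu zp zm k)))^2 = exp (- s * AA r lam mu k)"
    by (simp add: norm_exp_eq_Re power2_eq_square exp_add[symmetric])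
  thus ?thesis by (simp add: cnj_mult_self)
qed

lemma exp_integral: fixes A t :: real assumes "A > 0" "t \<ge> 0"
  shows "((\<lambda>s. exp (- (t - s) * A)) has_integral ((1 - exp (- t * A)) / A)) {0..t}"
proof -
  have d: "((\<lambda>s. exp (- (t - s) * A) / A) has_vector_derivative exp (- (t - s) * A)) (at s within {0..t})" for s
  proof -
    have "((\<lambda>s. exp (- (t - s) * A) / A) has_real_derivative (exp (- (t - s) * A) * A / A)) (at s within {0..t})"
      by (auto intro!: derivative_eq_intros)
    thus ?thesis using assms(1) by (simp add: has_real_derivative_iff_has_vector_derivative)
  qed
  have "((\<lambda>s. exp (- (t - s) * A)) has_integral (exp (- (t - t) * A) / A - exp (- (t - 0) * A) / A)) {0..t}"
    by (rule fundamental_theorem_of_calculus[OF assms(2)]) (use d in auto)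
  thus ?thesis by (simp add: diff_divide_distrib)
qed

lemma series_integral:
  fixes F :: "nat \<Rightarrow> real \<Rightarrow> complex"
  assumes "\<And>k s. s \<in> {0..t} \<Longrightarrow> norm (F k s) \<le> M k" "summable M"
    "\<And>k. continuous_on {0..t} (F k)" "\<And>k. (F k has_integral I k) {0..t}"
  shows "((\<lambda>s. \<Sum>k. F k s) has_integral (\<Sum>k. I k)) {0..t}" "summable I"
proof -
  have u: "uniform_limit {0..t} (\<lambda>n s. \<Sum>i<n. F i s) (\<lambda>s. \<Sum>k. F k s) sequentially"
    by (rule Weierstrass_m_test[OF assms(1,2)])
  have c: "continuous_on {0..t} (\<lambda>s. \<Sum>i<n. F i s)" for n
    by (intro continuous_on_sum assms(3))
  obtain Ia J where Ia: "\<And>n. ((\<lambda>s. \<Sum>i<n. F i s) has_integral Ia n) {0..t}"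
    and J: "((\<lambda>s. \<Sum>k. F k s) has_integral J) {0..t}" and lim: "Ia \<longlonglongrightarrow> J"
    by (rule uniform_limit_integral[OF u c]) auto
  have "Ia n = (\<Sum>i<n. I i)" for n
    using has_integral_unique[OF Ia[of n] has_integral_sum[OF finite_lessThan assms(4)]] .
  hence "Ia = (\<lambda>n. \<Sum>i<n. I i)" by (simp add: fun_eq_iff)
  hence "I sums J" using lim by (simp add: sums_def)
  thus "summable I" by (rule sums_summable)
  show "((\<lambda>s. \<Sum>k. F k s) has_integral (\<Sum>k. I k)) {0..t}" using J \<open>I sums J\<close> sums_unique by metis
qed


lemma term_integral: fixes A t c :: real assumes "A > 0" "t \<ge> 0"
  shows "((\<lambda>s. complex_of_real (c * exp (- (t - s) * A)) * z) has_integral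
           complex_of_real (c * ((1 - exp (- t * A)) / A)) * z) {0..t}"
proof -
  have "((\<lambda>s. c * exp (- (t - s) * A)) has_integral c * ((1 - exp (- t * A)) / A)) {0..t}"
    by (rule has_integral_mult_right[OF exp_integral[OF assms]])
  hence "((\<lambda>s. (c * exp (- (t - s) * A)) *\<^sub>R z) has_integral (c * ((1 - exp (- t * A)) / A)) *\<^sub>R z) {0..t}"
    by (rule has_integral_scaleR_left)
  thus ?thesis by (simp add: scaleR_conv_of_real)
qed

lemma term_bound: fixes A t c s :: real assumes "A > 0" "s \<le> t"
  shows "norm (complex_of_real (c * exp (- (t - s) * A)) * z) \<le> \<bar>c\<bar> * cmod z"
proof -
  have "(s - t) * A \<le> 0" using assms by (intro mult_nonpos_nonneg) auto
  hence "exp (- (t - s) * A) \<le> 1" by simp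
  hence "\<bar>c * exp (- (t - s) * A)\<bar> \<le> \<bar>c\<bar>" by (simp add: abs_mult mult_left_le)
  thus ?thesis by (simp add: norm_mult mult_right_mono)
qed

lemma term_cont: "continuous_on S (\<lambda>s::real. complex_of_real (c * exp (- (t - s) * A)) * z)"
  by (intro continuous_intros)

lemma summable_weighted:
  assumes r: "r > 0" and u: "domG u" and v: "l2 v"
  shows "summable (\<lambda>k. omega r k * cmod (cnj (v k) * u k))"
    "summable (\<lambda>k. omega r (Suc k) * cmod (cnj (v k) * u k))"
proof -
  have lu: "l2 u" and s4: "summable (\<lambda>n. (real n)^4 * (cmod (u n))^2)" using u by (auto simp: domG_def)
  have S: "summable (\<lambda>k. (cmod (v k))^2 + (2 * ((real k)^4 * (cmod (u k))^2) + 2 * (cmod (u k))^2))"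
    using v lu s4 unfolding l2_def by (intro summable_add summable_mult) auto
  have B: "norm (((real k)^2 + 1) * cmod (cnj (v k) * u k)) \<le> (cmod (v k))^2 + (2 * ((real k)^4 * (cmod (u k))^2) + 2 * (cmod (u k))^2)" for k
  proof -
    define a where "a = cmod (v k)"
    define b where "b = ((real k)^2 + 1) * cmod (u k)"
    have ab: "2 * a * b \<le> a^2 + b^2" by (rule sum_squares_bound)
    have "b^2 = ((real k)^2 + 1)^2 * (cmod (u k))^2" by (simp add: b_def power_mult_distrib)
    also have "\<dots> \<le> (2 * (real k)^4 + 2) * (cmod (u k))^2"
    proof (rule mult_right_mono)
      have "((real k)^2 + 1)^2 = (real k)^4 + 2 * (real k)^2 + 1" by (simp add: power2_eq_square power4_eq_xxxx algebra_simps)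
      moreover have "2 * (real k)^2 \<le> (real k)^4 + 1"
        using sum_squares_bound[of "(real k)^2" 1] by (simp add: power2_eq_square power4_eq_xxxx)
      ultimately show "((real k)^2 + 1)^2 \<le> 2 * (real k)^4 + 2" by linarith
    qed auto
    finally have "b^2 \<le> 2 * ((real k)^4 * (cmod (u k))^2) + 2 * (cmod (u k))^2" by (simp add: algebra_simps)
    moreover have "norm (((real k)^2 + 1) * cmod (cnj (v k) * u k)) = a * b"
      by (simp add: a_def b_def norm_mult abs_mult)
    moreover have "a * b \<ge> 0" by (simp add: a_def b_def)
    ultimately show ?thesis using ab unfolding a_def[symmetric] by (simp add: power2_eq_square)
  qed
  have W: "summable (\<lambda>k. ((real k)^2 + 1) * cmod (cnj (v k) * u k))"
    by (rule summable_comparison_test'[OF S, where N=0]) (rule B)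
  show "summable (\<lambda>k. omega r k * cmod (cnj (v k) * u k))"
  proof (rule summable_comparison_test'[OF summable_mult[OF W, of "1 + r"], where N=0])
    fix k :: nat
    show "norm (omega r k * cmod (cnj (v k) * u k)) \<le> (1 + r) * (((real k)^2 + 1) * cmod (cnj (v k) * u k))"
      using omega_le[OF r, of k] omega_nonneg[OF r, of k]
      by (simp add: abs_mult mult.assoc[symmetric] mult_right_mono)
  qed
  show "summable (\<lambda>k. omega r (Suc k) * cmod (cnj (v k) * u k))"
  proof (rule summable_comparison_test'[OF summable_mult[OF W, of "3 * (1 + r)"], where N=0])
    fix k :: nat
    have h1: "2 * real k \<le> (real k)^2 + 1" using sum_squares_bound[of "real k" 1] by simp
    have h2: "(real (Suc k))^2 + 1 = (real k)^2 + 2 * real k + 2" by (simp add: power2_eq_square algebra_simps)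
    have "(real (Suc k))^2 + 1 \<le> 3 * ((real k)^2 + 1)"
      unfolding h2 distrib_left using h1 zero_le_power2[of "real k"] by linarith
    hence m: "(1 + r) * ((real (Suc k))^2 + 1) \<le> (1 + r) * (3 * ((real k)^2 + 1))"
      using r by (intro mult_left_mono) auto
    hence "omega r (Suc k) \<le> (1 + r) * (3 * ((real k)^2 + 1))" using omega_le[OF r, of "Suc k"] by linarith
    moreover have "(1 + r) * (3 * ((real k)^2 + 1)) = 3 * (1 + r) * ((real k)^2 + 1)" by (simp only: mult_ac)
    ultimately have "omega r (Suc k) \<le> 3 * (1 + r) * ((real k)^2 + 1)" by simp
    thus "norm (omega r (Suc k) * cmod (cnj (v k) * u k)) \<le> 3 * (1 + r) * (((real k)^2 + 1) * cmod (cnj (v k) * u k))"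
      using omega_nonneg[OF r, of "Suc k"]
      by (simp add: abs_mult mult.assoc[symmetric] mult_right_mono)
  qed
qed




lemma cnj_prod3: "cnj (complex_of_real a * (complex_of_real b * (e * x))) * (complex_of_real a * (complex_of_real b * (e * y)))
   = complex_of_real (a^2 * b^2) * (cnj e * e) * (cnj x * y)"
  by (simp add: power2_eq_square mult_ac)

lemma cnj_prod1: "cnj (e * x) * (e * y) = (cnj e * e) * (cnj x * y)"
  by (simp add: mult_ac)

lemma id_solution:
  assumes r: "r > 0" and lam: "lam > 0" and t: "t \<ge> 0" and u: "domG u" and v: "domG v"
  shows "(\<lambda>s. inn (L1 r mu (Psg r lam mu zp zm (t - s) v)) (L1 r mu (Psg r lam mu zp zm (t - s) u))) integrable_on {0..t}"
    "(\<lambda>s. inn (L2 r lam (Psg r lam mu zp zm (t - s) v)) (L2 r lam (Psg r lam mu zp zm (t - s) u))) integrable_on {0..t}"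
    "inn v u = inn (Psg r lam mu zp zm t v) (Psg r lam mu zp zm t u)
         + integral {0..t} (\<lambda>s. inn (L1 r mu (Psg r lam mu zp zm (t - s) v)) (L1 r mu (Psg r lam mu zp zm (t - s) u)))
         + integral {0..t} (\<lambda>s. inn (L2 r lam (Psg r lam mu zp zm (t - s) v)) (L2 r lam (Psg r lam mu zp zm (t - s) u)))"
proof -
  define q where "q k = cnj (v k) * u k" for k
  define A where "A = AA r lam mu"
  have Apos: "A k > 0" for k unfolding A_def by (rule AA_pos[OF r lam])
  have lu: "l2 u" and lv: "l2 v" using u v by (auto simp: domG_def)
  have sq: "summable (\<lambda>k. cmod (q k))" unfolding q_def by (rule summable_inn_norm[OF lv lu])
  have sw1: "summable (\<lambda>k. omega r k * cmod (q k))" unfolding q_def by (rule summable_weighted(1)[OF r u lv])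
  have sw2: "summable (\<lambda>k. omega r (Suc k) * cmod (q k))" unfolding q_def by (rule summable_weighted(2)[OF r u lv])
  have om: "omega r k \<ge> 0" for k by (rule omega_nonneg[OF r])
  have E: "inn (Psg r lam mu zp zm t v) (Psg r lam mu zp zm t u) = (\<Sum>k. complex_of_real (exp (- t * A k)) * q k)"
    unfolding inn_def Psg_def cnj_prod1 expsq A_def q_def ..
  define F1 where "F1 k s = complex_of_real (mu^2 * omega r (Suc k) * exp (- (t - s) * A (Suc k))) * q (Suc k)" for k s
  define F2 where "F2 k s = (if k = 0 then 0 else complex_of_real (lam^2 * omega r k * exp (- (t - s) * A (k - 1))) * q (k - 1))" for k s
  have f1: "(\<lambda>s. inn (L1 r mu (Psg r lam mu zp zm (t - s) v)) (L1 r mu (Psg r lam mu zp zm (t - s) u))) = (\<lambda>s. \<Sum>k. F1 k s)"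
  proof (rule ext)
    fix s
    show "inn (L1 r mu (Psg r lam mu zp zm (t - s) v)) (L1 r mu (Psg r lam mu zp zm (t - s) u)) = (\<Sum>k. F1 k s)"
      unfolding inn_def L1_def Bop_def Psg_def cnj_prod3 expsq F1_def q_def A_def
      using om by (simp add: of_real_diff)
  qed
  have f2: "(\<lambda>s. inn (L2 r lam (Psg r lam mu zp zm (t - s) v)) (L2 r lam (Psg r lam mu zp zm (t - s) u))) = (\<lambda>s. \<Sum>k. F2 k s)"
  proof (rule ext)
    fix s
    have "cnj (L2 r lam (Psg r lam mu zp zm (t - s) v) k) * L2 r lam (Psg r lam mu zp zm (t - s) u) k = F2 k s" for k
      unfolding L2_def Bplus_def Psg_def F2_def
      by (cases "k = 0") (simp_all only: if_False if_True cnj_prod3 expsq q_def A_def om real_sqrt_pow2, simp_all)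
    thus "inn (L2 r lam (Psg r lam mu zp zm (t - s) v)) (L2 r lam (Psg r lam mu zp zm (t - s) u)) = (\<Sum>k. F2 k s)"
      unfolding inn_def by simp
  qed
  define I1 where "I1 k = complex_of_real (mu^2 * omega r (Suc k) * ((1 - exp (- t * A (Suc k))) / A (Suc k))) * q (Suc k)" for k
  define I2 where "I2 k = (if k = 0 then 0 else complex_of_real (lam^2 * omega r k * ((1 - exp (- t * A (k - 1))) / A (k - 1))) * q (k - 1))" for k
  have S1: "((\<lambda>s. \<Sum>k. F1 k s) has_integral (\<Sum>k. I1 k)) {0..t}" "summable I1"
  proof -
    have M: "summable (\<lambda>k. mu^2 * (omega r (Suc k) * cmod (q (Suc k))))"
      by (intro summable_mult summable_Suc_iff[where f="\<lambda>k. omega r k * cmod (q k)", THEN iffD2] sw1)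
    have b: "norm (F1 k s) \<le> mu^2 * (omega r (Suc k) * cmod (q (Suc k)))" if "s \<in> {0..t}" for k s
      using term_bound[OF Apos[of "Suc k"], where s=s and t=t and c="mu^2 * omega r (Suc k)" and z="q (Suc k)"] that om[of "Suc k"]
      unfolding F1_def by (simp add: abs_mult mult.assoc)
    have c: "continuous_on {0..t} (F1 k)" for k unfolding F1_def by (rule term_cont)
    have i: "(F1 k has_integral I1 k) {0..t}" for k unfolding F1_def I1_def
      by (rule term_integral[OF Apos t])
    show "((\<lambda>s. \<Sum>k. F1 k s) has_integral (\<Sum>k. I1 k)) {0..t}" "summable I1"
      by (rule series_integral[OF b M c i]; assumption)+
  qed
  have S2: "((\<lambda>s. \<Sum>k. F2 k s) has_integral (\<Sum>k. I2 k)) {0..t}" "summable I2"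
  proof -
    have "summable (\<lambda>n. (\<lambda>k. if k = 0 then 0 else lam^2 * (omega r k * cmod (q (k - 1)))) (Suc n))"
      using summable_mult[OF sw2, of "lam^2"] by simp
    hence M: "summable (\<lambda>k. if k = 0 then 0 else lam^2 * (omega r k * cmod (q (k - 1))))"
      by (rule summable_Suc_iff[THEN iffD1])
    have b: "norm (F2 k s) \<le> (if k = 0 then 0 else lam^2 * (omega r k * cmod (q (k - 1))))" if "s \<in> {0..t}" for k s
      using term_bound[OF Apos[of "k - 1"], where s=s and t=t and c="lam^2 * omega r k" and z="q (k - 1)"] that om[of k]
      unfolding F2_def by (simp add: abs_mult mult.assoc)
    have c: "continuous_on {0..t} (F2 k)" for k
    proof (cases "k = 0")
      case True thus ?thesis by (simp add: F2_def)
    next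
      case False
      hence "F2 k = (\<lambda>s. complex_of_real (lam^2 * omega r k * exp (- (t - s) * A (k - 1))) * q (k - 1))"
        by (simp add: F2_def fun_eq_iff)
      thus ?thesis by (simp only: term_cont)
    qed
    have i: "(F2 k has_integral I2 k) {0..t}" for k
    proof (cases "k = 0")
      case True
      hence "F2 k = (\<lambda>s. 0)" "I2 k = 0" by (simp_all add: F2_def I2_def fun_eq_iff)
      thus ?thesis by simp
    next
      case False
      hence "F2 k = (\<lambda>s. complex_of_real (lam^2 * omega r k * exp (- (t - s) * A (k - 1))) * q (k - 1))"
        "I2 k = complex_of_real (lam^2 * omega r k * ((1 - exp (- t * A (k - 1))) / A (k - 1))) * q (k - 1)"
        by (simp_all add: F2_def I2_def fun_eq_iff)
      thus ?thesis by (simp only: term_integral[OF Apos t])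
    qed
    show "((\<lambda>s. \<Sum>k. F2 k s) has_integral (\<Sum>k. I2 k)) {0..t}" "summable I2"
      by (rule series_integral[OF b M c i]; assumption)+
  qed
  show "(\<lambda>s. inn (L1 r mu (Psg r lam mu zp zm (t - s) v)) (L1 r mu (Psg r lam mu zp zm (t - s) u))) integrable_on {0..t}"
    unfolding f1 using S1(1) by blast
  show "(\<lambda>s. inn (L2 r lam (Psg r lam mu zp zm (t - s) v)) (L2 r lam (Psg r lam mu zp zm (t - s) u))) integrable_on {0..t}"
    unfolding f2 using S2(1) by blast
  define E0 where "E0 k = complex_of_real (exp (- t * A k)) * q k" for k
  define J1 where "J1 k = complex_of_real (mu^2 * omega r k * ((1 - exp (- t * A k)) / A k)) * q k" for k
  define J2 where "J2 k = complex_of_real (lam^2 * omega r (Suc k) * ((1 - exp (- t * A k)) / A k)) * q k" for k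
  have I1J: "I1 = (\<lambda>k. J1 (Suc k))" by (simp add: fun_eq_iff I1_def J1_def)
  have I2J: "(\<lambda>k. I2 (Suc k)) = J2" by (simp add: fun_eq_iff I2_def J2_def)
  have sJ1: "summable J1" using S1(2) unfolding I1J by (rule summable_Suc_iff[THEN iffD1])
  have sJ2: "summable J2" using S2(2) unfolding I2J[symmetric] by (simp add: summable_Suc_iff)
  have J10: "J1 0 = 0" by (simp add: J1_def)
  have sumI1: "(\<Sum>k. I1 k) = (\<Sum>k. J1 k)" unfolding I1J using suminf_split_head[OF sJ1] J10 by simp
  have I20: "I2 0 = 0" by (simp add: I2_def)
  have "(\<Sum>k. I2 (Suc k)) = (\<Sum>k. I2 k)" using suminf_split_head[OF S2(2)] I20 by simp
  hence sumI2: "(\<Sum>k. I2 k) = (\<Sum>k. J2 k)" using I2J by simp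
  have sE0: "summable E0"
  proof (rule summable_comparison_test'[OF sq, where N=0])
    fix k :: nat
    have "exp (- t * A k) \<le> 1" using t Apos[of k] by (simp add: mult_nonneg_nonneg)
    thus "norm (E0 k) \<le> cmod (q k)" unfolding E0_def by (simp add: norm_mult mult_left_le_one_le)
  qed
  have pt: "E0 k + J1 k + J2 k = q k" for k
  proof -
    have "exp (- t * A k) + mu^2 * omega r k * ((1 - exp (- t * A k)) / A k) + lam^2 * omega r (Suc k) * ((1 - exp (- t * A k)) / A k)
        = exp (- t * A k) + (mu^2 * omega r k + lam^2 * omega r (Suc k)) / A k * (1 - exp (- t * A k))" using Apos[of k] by (simp add: field_simps)
    also have "(mu^2 * omega r k + lam^2 * omega r (Suc k)) / A k = 1"
      using Apos[of k] by (simp add: A_def AA_def add.commute)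
    hence "exp (- t * A k) + (mu^2 * omega r k + lam^2 * omega r (Suc k)) / A k * (1 - exp (- t * A k)) = 1" by simp
    finally have "exp (- t * A k) + mu^2 * omega r k * ((1 - exp (- t * A k)) / A k) + lam^2 * omega r (Suc k) * ((1 - exp (- t * A k)) / A k) = 1" .
    hence "complex_of_real (exp (- t * A k)) + complex_of_real (mu^2 * omega r k * ((1 - exp (- t * A k)) / A k)) + complex_of_real (lam^2 * omega r (Suc k) * ((1 - exp (- t * A k)) / A k)) = 1"
      by (metis of_real_1 of_real_add)
    thus ?thesis unfolding E0_def J1_def J2_def by (metis distrib_right mult_1)
  qed
  have "inn v u = (\<Sum>k. q k)" by (simp add: inn_def q_def)
  also have "\<dots> = (\<Sum>k. E0 k + J1 k + J2 k)" by (simp add: pt)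
  also have "\<dots> = (\<Sum>k. E0 k) + (\<Sum>k. J1 k) + (\<Sum>k. J2 k)"
    using suminf_add[OF summable_add[OF sE0 sJ1] sJ2] suminf_add[OF sE0 sJ1] by simp
  finally show "inn v u = inn (Psg r lam mu zp zm t v) (Psg r lam mu zp zm t u)
         + integral {0..t} (\<lambda>s. inn (L1 r mu (Psg r lam mu zp zm (t - s) v)) (L1 r mu (Psg r lam mu zp zm (t - s) u)))
         + integral {0..t} (\<lambda>s. inn (L2 r lam (Psg r lam mu zp zm (t - s) v)) (L2 r lam (Psg r lam mu zp zm (t - s) u)))"
    unfolding f1 f2 E integral_unique[OF S1(1)] integral_unique[OF S2(1)] sumI1 sumI2 E0_def[symmetric] .
qed




lemma ode_deriv:
  fixes d :: "nat \<Rightarrow> real \<Rightarrow> complex" and X :: "nat \<Rightarrow> complex" and A b c :: "nat \<Rightarrow> real"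
  assumes t0: "t0 \<ge> 0"
    and G1: "\<And>n s. G1 n s = complex_of_real (b n * exp (s * A n)) * d (n - 1) s"
    and G2: "\<And>n s. G2 n s = complex_of_real (c n * exp (s * A n)) * d (Suc n) s"
    and H1: "\<And>n t. t \<in> {0..t0} \<Longrightarrow> d n t = complex_of_real (exp (- t * A n)) * (X n + integral {0..t} (G1 n) + integral {0..t} (G2 n))"
    and H2: "\<And>n. G1 n integrable_on {0..t0}" "\<And>n. G2 n integrable_on {0..t0}"
  shows "\<And>n t. t \<in> {0..t0} \<Longrightarrow> (d n has_vector_derivative
            (complex_of_real (- A n) * d n t + complex_of_real (b n) * d (n - 1) t + complex_of_real (c n) * d (Suc n) t))
            (at t within {0..t0})"
    and "\<And>n. d n 0 = X n"
    and "\<And>n. continuous_on {0..t0} (d n)"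
proof -
  define R where "R n t = complex_of_real (exp (- t * A n)) * (X n + integral {0..t} (G1 n) + integral {0..t} (G2 n))" for n t
  have dR: "d n t = R n t" if "t \<in> {0..t0}" for n t using H1[OF that] by (simp add: R_def)
  show "d n 0 = X n" for n using dR[of 0 n] t0 by (simp add: R_def)
  have cR: "continuous_on {0..t0} (R n)" for n
    unfolding R_def
    by (intro continuous_intros indefinite_integral_continuous_1 H2)
  show cd: "continuous_on {0..t0} (d n)" for n
    using cR[of n] dR by (metis continuous_on_cong)
  have cG1: "continuous_on {0..t0} (G1 n)" for n
    unfolding G1[abs_def] by (intro continuous_intros cd)
  have cG2: "continuous_on {0..t0} (G2 n)" for n
    unfolding G2[abs_def] by (intro continuous_intros cd)
  fix n t assume t: "t \<in> {0..t0}"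
  have e: "((\<lambda>t. complex_of_real (exp (- t * A n))) has_vector_derivative complex_of_real (- A n * exp (- t * A n))) (at t within {0..t0})"
  proof -
    have "((\<lambda>t. exp (- t * A n)) has_field_derivative (exp (- t * A n) * (- A n))) (at t within {0..t0})"
      by (auto intro!: derivative_eq_intros)
    hence "((\<lambda>t. exp (- t * A n)) has_field_derivative (- A n * exp (- t * A n))) (at t within {0..t0})"
      by (simp add: mult.commute)
    thus ?thesis by (rule has_vector_derivative_of_real)
  qed
  have g: "((\<lambda>t. X n + integral {0..t} (G1 n) + integral {0..t} (G2 n)) has_vector_derivative (0 + G1 n t + G2 n t)) (at t within {0..t0})"
    by (intro has_vector_derivative_add has_vector_derivative_const integral_has_vector_derivative cG1 cG2 t)
  have Rd: "(R n has_vector_derivative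
          (complex_of_real (exp (- t * A n)) * (0 + G1 n t + G2 n t)
           + complex_of_real (- A n * exp (- t * A n)) * (X n + integral {0..t} (G1 n) + integral {0..t} (G2 n)))) (at t within {0..t0})"
    unfolding R_def[abs_def] by (rule has_vector_derivative_mult[OF e g])
  have ee: "exp (- t * A n) * exp (t * A n) = 1" by (simp add: exp_add[symmetric])
  have v1: "complex_of_real (exp (- t * A n)) * G1 n t = complex_of_real (b n) * d (n - 1) t"
  proof -
    have "exp (- t * A n) * (b n * exp (t * A n)) = b n" using ee by (simp add: mult_ac)
    thus ?thesis unfolding G1 by (metis (no_types, lifting) mult.assoc of_real_mult)
  qed
  have v2: "complex_of_real (exp (- t * A n)) * G2 n t = complex_of_real (c n) * d (Suc n) t"
  proof -
    have "exp (- t * A n) * (c n * exp (t * A n)) = c n" using ee by (simp add: mult_ac)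
    thus ?thesis unfolding G2 by (metis (no_types, lifting) mult.assoc of_real_mult)
  qed
  have v3: "complex_of_real (- A n * exp (- t * A n)) * (X n + integral {0..t} (G1 n) + integral {0..t} (G2 n))
       = complex_of_real (- A n) * d n t"
    using dR[OF t, of n] by (simp add: R_def mult.assoc)
  have "complex_of_real (exp (- t * A n)) * (0 + G1 n t + G2 n t)
           + complex_of_real (- A n * exp (- t * A n)) * (X n + integral {0..t} (G1 n) + integral {0..t} (G2 n))
        = complex_of_real (- A n) * d n t + complex_of_real (b n) * d (n - 1) t + complex_of_real (c n) * d (Suc n) t"
    using v1 v2 v3 by (simp add: distrib_left)
  with Rd have "(R n has_vector_derivative
            (complex_of_real (- A n) * d n t + complex_of_real (b n) * d (n - 1) t + complex_of_real (c n) * d (Suc n) t))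
            (at t within {0..t0})" by simp
  thus "(d n has_vector_derivative
            (complex_of_real (- A n) * d n t + complex_of_real (b n) * d (n - 1) t + complex_of_real (c n) * d (Suc n) t))
            (at t within {0..t0})"
    by (rule has_vector_derivative_transform[OF t dR, rotated])
qed


lemma telescope:
  fixes p b c :: "nat \<Rightarrow> real" and D :: "nat \<Rightarrow> complex"
  assumes b0: "b 0 = 0" and bal: "\<And>n. p (Suc n) * b (Suc n) = p n * c n"
  shows "(\<Sum>n<Suc N. complex_of_real (p n) * (complex_of_real (- (b n + c n)) * D n + complex_of_real (b n) * D (n - 1) + complex_of_real (c n) * D (Suc n)))
       = complex_of_real (p N * c N) * (D (Suc N) - D N)"
proof (induction N)
  case 0
  show ?case using b0 by (simp add: algebra_simps)
next
  case (Suc N)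
  have h: "complex_of_real (p (Suc N)) * complex_of_real (b (Suc N)) = complex_of_real (p N * c N)"
    using bal[of N] by (metis of_real_mult)
  have e: "complex_of_real (p (Suc N)) * (complex_of_real (- (b (Suc N) + c (Suc N))) * D (Suc N) + complex_of_real (b (Suc N)) * D (Suc N - 1) + complex_of_real (c (Suc N)) * D (Suc (Suc N)))
     = (complex_of_real (p (Suc N)) * complex_of_real (b (Suc N))) * (D N - D (Suc N)) + complex_of_real (p (Suc N) * c (Suc N)) * (D (Suc (Suc N)) - D (Suc N))"
    by (simp add: algebra_simps)
  show ?case
    by (subst sum.lessThan_Suc) (simp only: Suc.IH e h, simp add: algebra_simps)
qed

lemma poly_geom_zero:
  fixes q r :: real assumes "0 \<le> q" "q < 1"
  shows "(\<lambda>N. q ^ (2 * N) * ((real N + 1) * (real N + r))) \<longlonglongrightarrow> 0"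
proof -
  have l0: "(\<lambda>N. real N * q ^ N) \<longlonglongrightarrow> 0"
    using powser_times_n_limit_0[of q] assms by simp
  have lq: "(\<lambda>N. q ^ N) \<longlonglongrightarrow> 0" using LIMSEQ_power_zero[of q] assms by simp
  have a: "(\<lambda>N. real N * q ^ N + q ^ N) \<longlonglongrightarrow> 0 + 0" by (intro tendsto_add l0 lq)
  have b: "(\<lambda>N. real N * q ^ N + r * q ^ N) \<longlonglongrightarrow> 0 + r * 0" by (intro tendsto_add tendsto_mult l0 lq tendsto_const)
  have "(\<lambda>N. (real N * q ^ N + q ^ N) * (real N * q ^ N + r * q ^ N)) \<longlonglongrightarrow> (0 + 0) * (0 + r * 0)"
    by (intro tendsto_mult a b)
  moreover have "(real N * q ^ N + q ^ N) * (real N * q ^ N + r * q ^ N) = q ^ (2 * N) * ((real N + 1) * (real N + r))" for N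
    by (simp add: power_mult algebra_simps power2_eq_square)
  ultimately show ?thesis by simp
qed




lemma Psg_basis: "Psg r lam mu zp zm \<tau> (basis n) = (\<lambda>k. exp (complex_of_real \<tau> * gdiag r lam mu zp zm n) * basis n k)"
  by (auto simp: Psg_def basis_def fun_eq_iff)

lemma L1_basis: "L1 r mu (Psg r lam mu zp zm \<tau> (basis n)) =
   (\<lambda>k. (complex_of_real mu * (complex_of_real (sqrt (omega r n)) * exp (complex_of_real \<tau> * gdiag r lam mu zp zm n))) * basis (n - 1) k)"
proof (rule ext)
  fix k
  show "L1 r mu (Psg r lam mu zp zm \<tau> (basis n)) k =
   (complex_of_real mu * (complex_of_real (sqrt (omega r n)) * exp (complex_of_real \<tau> * gdiag r lam mu zp zm n))) * basis (n - 1) k"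
    by (cases n) (auto simp: L1_def Bop_def Psg_def basis_def)
qed

lemma L2_basis: "L2 r lam (Psg r lam mu zp zm \<tau> (basis n)) =
   (\<lambda>k. (complex_of_real lam * (complex_of_real (sqrt (omega r (Suc n))) * exp (complex_of_real \<tau> * gdiag r lam mu zp zm n))) * basis (Suc n) k)"
proof (rule ext)
  fix k
  show "L2 r lam (Psg r lam mu zp zm \<tau> (basis n)) k =
   (complex_of_real lam * (complex_of_real (sqrt (omega r (Suc n))) * exp (complex_of_real \<tau> * gdiag r lam mu zp zm n))) * basis (Suc n) k"
    by (cases k) (auto simp: L2_def Bplus_def Psg_def basis_def)
qed

lemma inn_sb: "inn (\<lambda>k. a * basis m k) (\<lambda>k. a * y k) = cnj a * a * y m"
proof -
  have "inn (\<lambda>k. a * basis m k) (\<lambda>k. a * y k) = (\<Sum>k\<in>{m}. cnj (a * basis m k) * (a * y k))"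
    unfolding inn_def by (rule suminf_finite) (auto simp: basis_def)
  thus ?thesis by (simp add: basis_def)
qed

lemma cnj_prod2: "cnj (complex_of_real a * (complex_of_real b * e)) * (complex_of_real a * (complex_of_real b * e))
   = complex_of_real (a^2 * b^2) * (cnj e * e)"
  by (simp add: power2_eq_square mult_ac)

lemma domG_basis: "domG (basis n)"
proof -
  have "summable (\<lambda>k. (real k)^4 * (cmod (basis n k))^2)"
    by (rule summable_finite[of "{n}"]) (auto simp: basis_def)
  thus ?thesis by (simp add: domG_def l2_basis)
qed

lemma diag_eq:
  assumes r: "r > 0" and Q: "qds_solution r lam mu zp zm T" and x: "bop x" and t: "t \<ge> 0"
  defines "d \<equiv> (\<lambda>n s. T s x (basis n) n)"
  defines "A \<equiv> AA r lam mu"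
  defines "G1 \<equiv> (\<lambda>n s. complex_of_real (mu^2 * omega r n * exp (s * A n)) * d (n - 1) s)"
  defines "G2 \<equiv> (\<lambda>n s. complex_of_real (lam^2 * omega r (Suc n) * exp (s * A n)) * d (Suc n) s)"
  shows "G1 n integrable_on {0..t}" "G2 n integrable_on {0..t}"
    "d n t = complex_of_real (exp (- t * A n)) * (x (basis n) n + integral {0..t} (G1 n) + integral {0..t} (G2 n))"
proof -
  let ?P = "Psg r lam mu zp zm"
  have Tb: "bop (T s x)" if "s \<ge> 0" for s using Q x that by (simp add: qds_solution_def)
  have QI: "(\<lambda>s. inn (L1 r mu (?P (t - s) v)) (T s x (L1 r mu (?P (t - s) u)))) integrable_on {0..t} \<and>
       (\<lambda>s. inn (L2 r lam (?P (t - s) v)) (T s x (L2 r lam (?P (t - s) u)))) integrable_on {0..t} \<and>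
       inn v (T t x u) = inn (?P t v) (x (?P t u))
         + integral {0..t} (\<lambda>s. inn (L1 r mu (?P (t - s) v)) (T s x (L1 r mu (?P (t - s) u))))
         + integral {0..t} (\<lambda>s. inn (L2 r lam (?P (t - s) v)) (T s x (L2 r lam (?P (t - s) u))))"
    if "domG u" "domG v" for u v
    using Q x t that unfolding qds_solution_def by blast
  note Qn = QI[OF domG_basis domG_basis, of n n]
  have ee: "exp (- (t - s) * A n) = exp (- t * A n) * exp (s * A n)" for s
    by (simp add: exp_add[symmetric] algebra_simps)
  have i1: "inn (L1 r mu (?P (t - s) (basis n))) (T s x (L1 r mu (?P (t - s) (basis n))))
        = complex_of_real (exp (- t * A n)) * G1 n s" if "s \<in> {0..t}" for s
  proof -
    have Ts: "bop (T s x)" using that Tb by auto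
    have "inn (L1 r mu (?P (t - s) (basis n))) (T s x (L1 r mu (?P (t - s) (basis n))))
       = complex_of_real (mu^2 * (sqrt (omega r n))^2) * complex_of_real (exp (- (t - s) * A n)) * d (n - 1) s"
      using that unfolding L1_basis bop_scale[OF Ts l2_basis] inn_sb cnj_prod2 expsq d_def A_def by simp
    also have "\<dots> = complex_of_real (exp (- t * A n)) * G1 n s"
      unfolding G1_def ee using omega_nonneg[OF r, of n] by (simp add: mult_ac)
    finally show ?thesis .
  qed
  have i2: "inn (L2 r lam (?P (t - s) (basis n))) (T s x (L2 r lam (?P (t - s) (basis n))))
        = complex_of_real (exp (- t * A n)) * G2 n s" if "s \<in> {0..t}" for s
  proof -
    have Ts: "bop (T s x)" using that Tb by auto
    have "inn (L2 r lam (?P (t - s) (basis n))) (T s x (L2 r lam (?P (t - s) (basis n))))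
       = complex_of_real (lam^2 * (sqrt (omega r (Suc n)))^2) * complex_of_real (exp (- (t - s) * A n)) * d (Suc n) s"
      using that unfolding L2_basis bop_scale[OF Ts l2_basis] inn_sb cnj_prod2 expsq d_def A_def by simp
    also have "\<dots> = complex_of_real (exp (- t * A n)) * G2 n s"
      unfolding G2_def ee using omega_nonneg[OF r, of "Suc n"] by (simp add: mult_ac)
    finally show ?thesis .
  qed
  have ne: "exp (- t * A n) \<noteq> 0" by simp
  let ?F1 = "\<lambda>s. inn (L1 r mu (?P (t - s) (basis n))) (T s x (L1 r mu (?P (t - s) (basis n))))"
  let ?F2 = "\<lambda>s. inn (L2 r lam (?P (t - s) (basis n))) (T s x (L2 r lam (?P (t - s) (basis n))))"
  have c1: "?F1 integrable_on {0..t} \<longleftrightarrow> (\<lambda>s. complex_of_real (exp (- t * A n)) * G1 n s) integrable_on {0..t}"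
    by (rule integrable_cong) (erule i1)
  have c2: "?F2 integrable_on {0..t} \<longleftrightarrow> (\<lambda>s. complex_of_real (exp (- t * A n)) * G2 n s) integrable_on {0..t}"
    by (rule integrable_cong) (erule i2)
  have j1: "integral {0..t} ?F1 = integral {0..t} (\<lambda>s. complex_of_real (exp (- t * A n)) * G1 n s)"
    by (rule integral_cong) (erule i1)
  have j2: "integral {0..t} ?F2 = integral {0..t} (\<lambda>s. complex_of_real (exp (- t * A n)) * G2 n s)"
    by (rule integral_cong) (erule i2)
  have int1: "(\<lambda>s. complex_of_real (exp (- t * A n)) * G1 n s) integrable_on {0..t}" using Qn c1 by blast
  have int2: "(\<lambda>s. complex_of_real (exp (- t * A n)) * G2 n s) integrable_on {0..t}" using Qn c2 by blast
  show g1: "G1 n integrable_on {0..t}" using int1 integrable_on_cmult_left_iff[OF ne] by blast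
  show g2: "G2 n integrable_on {0..t}" using int2 integrable_on_cmult_left_iff[OF ne] by blast
  have "d n t = inn (basis n) (T t x (basis n))" by (simp add: d_def inn_basis_left)
  also have "\<dots> = inn (?P t (basis n)) (x (?P t (basis n)))
         + integral {0..t} (\<lambda>s. complex_of_real (exp (- t * A n)) * G1 n s)
         + integral {0..t} (\<lambda>s. complex_of_real (exp (- t * A n)) * G2 n s)"
    using Qn j1 j2 by simp
  also have "inn (?P t (basis n)) (x (?P t (basis n))) = complex_of_real (exp (- t * A n)) * x (basis n) n"
    unfolding Psg_basis bop_scale[OF x l2_basis] inn_sb expsq A_def ..
  finally show "d n t = complex_of_real (exp (- t * A n)) * (x (basis n) n + integral {0..t} (G1 n) + integral {0..t} (G2 n))"
    by (simp add: distrib_left)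
qed




lemma nrm_add_le: assumes "l2 a" "l2 b" shows "nrm (\<lambda>k. a k + b k) \<le> 2 * nrm a + 2 * nrm b"
proof -
  have S: "summable (\<lambda>n. 2 * (cmod (a n))^2 + 2 * (cmod (b n))^2)"
    using assms unfolding l2_def by (intro summable_add summable_mult) auto
  have B: "(cmod (a n + b n))^2 \<le> 2 * (cmod (a n))^2 + 2 * (cmod (b n))^2" for n
  proof -
    have "cmod (a n + b n) \<le> cmod (a n) + cmod (b n)" by (rule norm_triangle_ineq)
    hence "(cmod (a n + b n))^2 \<le> (cmod (a n) + cmod (b n))^2" by (simp add: power_mono)
    also have "\<dots> \<le> 2 * (cmod (a n))^2 + 2 * (cmod (b n))^2"
      unfolding power2_sum using sum_squares_bound[of "cmod (a n)" "cmod (b n)"] by linarith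
    finally show ?thesis .
  qed
  have "nrm (\<lambda>k. a k + b k) \<le> (\<Sum>n. 2 * (cmod (a n))^2 + 2 * (cmod (b n))^2)"
    unfolding nrm_def using l2_add[OF assms] unfolding l2_def by (intro suminf_le B S)
  also have "\<dots> = 2 * nrm a + 2 * nrm b"
    using assms unfolding l2_def nrm_def by (simp add: suminf_add[symmetric] suminf_mult summable_mult)
  finally show ?thesis .
qed

lemma nrm_scale: assumes "l2 a" shows "nrm (\<lambda>k. c * a k) = (cmod c)^2 * nrm a"
  using assms unfolding l2_def nrm_def by (simp add: norm_mult power_mult_distrib suminf_mult)

lemma bop_id: "bop (\<lambda>w. w)"
  unfolding bop_def by (auto intro: exI[of _ 1])

lemma bop_opscale: assumes "bop y" shows "bop (\<lambda>w k. c * y w k)"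
proof -
  obtain C where C: "C \<ge> 0" "\<And>u. l2 u \<Longrightarrow> nrm (y u) \<le> C * nrm u" using bop_bound[OF assms] by blast
  show ?thesis unfolding bop_def
  proof (intro conjI allI impI)
    fix u assume "l2 u" thus "l2 (\<lambda>k. c * y u k)" by (intro l2_scale bop_l2[OF assms])
  next
    fix u v assume "l2 u" "l2 v"
    thus "(\<lambda>k. c * y (\<lambda>k. u k + v k) k) = (\<lambda>k. c * y u k + c * y v k)"
      using bop_add[OF assms] by (simp add: distrib_left)
  next
    fix c' u assume "l2 u"
    thus "(\<lambda>k. c * y (\<lambda>k. c' * u k) k) = (\<lambda>k. c' * (c * y u k))"
      using bop_scale[OF assms] by (simp add: mult_ac)
  next
    have "nrm (\<lambda>k. c * y u k) \<le> ((cmod c)^2 * C) * nrm u" if "l2 u" for u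
      using nrm_scale[OF bop_l2[OF assms that], of c] C(2)[OF that]
      by (simp add: mult.assoc mult_left_mono)
    thus "\<exists>C. \<forall>u. l2 u \<longrightarrow> (\<Sum>n. (cmod (c * y u n))\<^sup>2) \<le> C * (\<Sum>n. (cmod (u n))\<^sup>2)"
      unfolding nrm_def by blast
  qed
qed

lemma bop_opadd: assumes "bop y" "bop z" shows "bop (\<lambda>w k. y w k + z w k)"
proof -
  obtain C where C: "C \<ge> 0" "\<And>u. l2 u \<Longrightarrow> nrm (y u) \<le> C * nrm u" using bop_bound[OF assms(1)] by blast
  obtain D where D: "D \<ge> 0" "\<And>u. l2 u \<Longrightarrow> nrm (z u) \<le> D * nrm u" using bop_bound[OF assms(2)] by blast
  show ?thesis unfolding bop_def
  proof (intro conjI allI impI)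
    fix u assume "l2 u" thus "l2 (\<lambda>k. y u k + z u k)" by (intro l2_add bop_l2[OF assms(1)] bop_l2[OF assms(2)])
  next
    fix u v assume "l2 u" "l2 v"
    thus "(\<lambda>k. y (\<lambda>k. u k + v k) k + z (\<lambda>k. u k + v k) k) = (\<lambda>k. y u k + z u k + (y v k + z v k))"
      using bop_add[OF assms(1)] bop_add[OF assms(2)] by (simp add: algebra_simps)
  next
    fix c u assume "l2 u"
    thus "(\<lambda>k. y (\<lambda>k. c * u k) k + z (\<lambda>k. c * u k) k) = (\<lambda>k. c * (y u k + z u k))"
      using bop_scale[OF assms(1)] bop_scale[OF assms(2)] by (simp add: distrib_left)
  next
    have "nrm (\<lambda>k. y u k + z u k) \<le> (2 * C + 2 * D) * nrm u" if "l2 u" for u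
      using nrm_add_le[OF bop_l2[OF assms(1) that] bop_l2[OF assms(2) that]] C(2)[OF that] D(2)[OF that]
      by (simp add: algebra_simps)
    thus "\<exists>C. \<forall>u. l2 u \<longrightarrow> (\<Sum>n. (cmod (y u n + z u n))\<^sup>2) \<le> C * (\<Sum>n. (cmod (u n))\<^sup>2)"
      unfolding nrm_def by blast
  qed
qed

lemma opos_id: "opos (\<lambda>w. w)"
  unfolding opos_def using inn_self nrm_nonneg by auto




lemma mq_parts:
  assumes M: "minimal_qds r lam mu zp zm T"
  shows "qds_solution r lam mu zp zm T"
    "\<And>s x1 y1 u. s \<ge> 0 \<Longrightarrow> bop x1 \<Longrightarrow> bop y1 \<Longrightarrow> l2 u \<Longrightarrow> T s (\<lambda>w k. x1 w k + y1 w k) u = (\<lambda>k. T s x1 u k + T s y1 u k)"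
    "\<And>s x1 c u. s \<ge> 0 \<Longrightarrow> bop x1 \<Longrightarrow> l2 u \<Longrightarrow> T s (\<lambda>w k. c * x1 w k) u = (\<lambda>k. c * T s x1 u k)"
    "\<And>T' s x1. qds_solution r lam mu zp zm T' \<Longrightarrow> s \<ge> 0 \<Longrightarrow> bop x1 \<Longrightarrow> opos x1 \<Longrightarrow> ople (T s x1) (T' s x1)"
  using M unfolding minimal_qds_def by blast+

lemma pos_diag:
  assumes Q: "qds_solution r lam mu zp zm T" and "s \<ge> 0" "bop y" "opos y"
  shows "Im (T s y (basis n) n) = 0" "Re (T s y (basis n) n) \<ge> 0"
proof -
  have "opos (T s y)" using Q assms unfolding qds_solution_def by blast
  hence "Im (inn (basis n) (T s y (basis n))) = 0 \<and> 0 \<le> Re (inn (basis n) (T s y (basis n)))"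
    unfolding opos_def using l2_basis by blast
  thus "Im (T s y (basis n) n) = 0" "Re (T s y (basis n) n) \<ge> 0" by (simp_all add: inn_basis_left)
qed

lemma Tid_bound:
  assumes r: "r > 0" and lam: "lam > 0" and M: "minimal_qds r lam mu zp zm T" and s: "s \<ge> 0"
  shows "Im (T s (\<lambda>w. w) (basis n) n) = 0" "0 \<le> Re (T s (\<lambda>w. w) (basis n) n)" "Re (T s (\<lambda>w. w) (basis n) n) \<le> 1"
proof -
  note Q = mq_parts(1)[OF M]
  define T' where "T' = (\<lambda>s y. if y = (\<lambda>w. w) then (\<lambda>w. w) else T s y)"
  have Q': "qds_solution r lam mu zp zm T'"
    unfolding qds_solution_def
  proof (intro conjI allI impI)
    fix t :: real and y assume "0 \<le> t" "bop y"
    thus "bop (T' t y)" using Q bop_id unfolding T'_def qds_solution_def by auto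
  next
    fix t :: real and y assume "0 \<le> t" "bop y" "opos y"
    thus "opos (T' t y)" using Q opos_id unfolding T'_def qds_solution_def by auto
  next
    fix t :: real and y u v assume t: "0 \<le> t" and y: "bop y" and u: "domG u" and v: "domG v"
    show "(\<lambda>s. inn (L1 r mu (Psg r lam mu zp zm (t - s) v)) (T' s y (L1 r mu (Psg r lam mu zp zm (t - s) u)))) integrable_on {0..t}"
    proof (cases "y = (\<lambda>w. w)")
      case True thus ?thesis unfolding T'_def using id_solution(1)[OF r lam t u v] by simp
    next
      case False thus ?thesis unfolding T'_def using Q t y u v unfolding qds_solution_def by simp
    qed
    show "(\<lambda>s. inn (L2 r lam (Psg r lam mu zp zm (t - s) v)) (T' s y (L2 r lam (Psg r lam mu zp zm (t - s) u)))) integrable_on {0..t}"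
    proof (cases "y = (\<lambda>w. w)")
      case True thus ?thesis unfolding T'_def using id_solution(2)[OF r lam t u v] by simp
    next
      case False thus ?thesis unfolding T'_def using Q t y u v unfolding qds_solution_def by simp
    qed
    show "inn v (T' t y u) =
         inn (Psg r lam mu zp zm t v) (y (Psg r lam mu zp zm t u))
         + integral {0..t} (\<lambda>s. inn (L1 r mu (Psg r lam mu zp zm (t - s) v)) (T' s y (L1 r mu (Psg r lam mu zp zm (t - s) u))))
         + integral {0..t} (\<lambda>s. inn (L2 r lam (Psg r lam mu zp zm (t - s) v)) (T' s y (L2 r lam (Psg r lam mu zp zm (t - s) u))))"
    proof (cases "y = (\<lambda>w. w)")
      case True thus ?thesis unfolding T'_def using id_solution(3)[OF r lam t u v] by simp
    next
      case False thus ?thesis unfolding T'_def using Q t y u v unfolding qds_solution_def by simp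
    qed
  qed
  have "ople (T s (\<lambda>w. w)) (T' s (\<lambda>w. w))" by (rule mq_parts(4)[OF M Q' s bop_id opos_id])
  hence "opos (\<lambda>u k. u k - T s (\<lambda>w. w) u k)" by (simp add: ople_def T'_def)
  hence "0 \<le> Re (inn (basis n) (\<lambda>k. basis n k - T s (\<lambda>w. w) (basis n) k))"
    unfolding opos_def using l2_basis by blast
  thus "Re (T s (\<lambda>w. w) (basis n) n) \<le> 1" unfolding inn_basis_left by (simp add: basis_def)
  show "Im (T s (\<lambda>w. w) (basis n) n) = 0" "0 \<le> Re (T s (\<lambda>w. w) (basis n) n)"
    using pos_diag[OF Q s bop_id opos_id] by auto
qed

lemma sa_bound:
  assumes r: "r > 0" and lam: "lam > 0" and M: "minimal_qds r lam mu zp zm T"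
    and y: "bop y" and sa: "\<And>u. l2 u \<Longrightarrow> Im (inn u (y u)) = 0"
  shows "\<exists>c\<ge>0. \<forall>s\<ge>0. \<forall>n. cmod (T s y (basis n) n) \<le> c"
proof -
  note Q = mq_parts(1)[OF M]
  obtain C where C: "C \<ge> 0" "\<And>u. l2 u \<Longrightarrow> nrm (y u) \<le> C * nrm u" using bop_bound[OF y] by blast
  define c where "c = sqrt C"
  have c0: "c \<ge> 0" using C(1) by (simp add: c_def)
  have ib: "\<bar>Re (inn u (y u))\<bar> \<le> c * nrm u" if u: "l2 u" for u
  proof -
    have "\<bar>Re (inn u (y u))\<bar> \<le> cmod (inn u (y u))" by (rule abs_Re_le_cmod)
    also have "\<dots> \<le> sqrt (nrm u) * sqrt (nrm (y u))" by (rule cs[OF u bop_l2[OF y u]])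
    also have "\<dots> \<le> sqrt (nrm u) * sqrt (C * nrm u)"
      using C(1) nrm_nonneg[OF u] by (intro mult_left_mono real_sqrt_le_mono C(2) u) auto
    also have "\<dots> = c * nrm u" using nrm_nonneg[OF u] C(1)
      by (simp add: c_def real_sqrt_mult mult_ac)
    finally show ?thesis .
  qed
  define Pp where "Pp = (\<lambda>w k. complex_of_real c * w k + y w k)"
  define Pm where "Pm = (\<lambda>w k. complex_of_real c * w k + (-1) * y w k)"
  have bc: "bop (\<lambda>w k. complex_of_real c * w k)" using bop_opscale[OF bop_id] by simp
  have bm: "bop (\<lambda>w k. (-1) * y w k)" by (rule bop_opscale[OF y])
  have bPp: "bop Pp" unfolding Pp_def using bop_opadd[OF bc y] by simp
  have bPm: "bop Pm" unfolding Pm_def using bop_opadd[OF bc bm] by simp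
  have innP: "inn u (\<lambda>k. complex_of_real c * u k + e * y u k) = complex_of_real (c * nrm u) + e * inn u (y u)" if u: "l2 u" for u e
    using inn_add[OF u l2_scale[OF u] l2_scale[OF bop_l2[OF y u]]] inn_scale[OF u u] inn_scale[OF u bop_l2[OF y u]] inn_self[OF u]
    by simp
  have oPp: "opos Pp" unfolding opos_def Pp_def
  proof (intro allI impI conjI)
    fix u assume u: "l2 u"
    have e: "inn u (\<lambda>k. complex_of_real c * u k + y u k) = complex_of_real (c * nrm u) + 1 * inn u (y u)"
      using innP[OF u, of 1] by simp
    show "Im (inn u (\<lambda>k. complex_of_real c * u k + y u k)) = 0" unfolding e using sa[OF u] by simp
    show "0 \<le> Re (inn u (\<lambda>k. complex_of_real c * u k + y u k))" unfolding e using ib[OF u] by simp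
  qed
  have oPm: "opos Pm" unfolding opos_def Pm_def
  proof (intro allI impI conjI)
    fix u assume u: "l2 u"
    have e: "inn u (\<lambda>k. complex_of_real c * u k + (-1) * y u k) = complex_of_real (c * nrm u) + (-1) * inn u (y u)"
      using innP[OF u, of "-1"] by simp
    show "Im (inn u (\<lambda>k. complex_of_real c * u k + (-1) * y u k)) = 0" unfolding e using sa[OF u] by simp
    show "0 \<le> Re (inn u (\<lambda>k. complex_of_real c * u k + (-1) * y u k))" unfolding e using ib[OF u] by simp
  qed
  have main: "cmod (T s y (basis n) n) \<le> c" if s: "s \<ge> 0" for s n
  proof -
    define a where "a = T s (\<lambda>w. w) (basis n) n"
    define z where "z = T s y (basis n) n"
    have ca: "T s (\<lambda>w k. complex_of_real c * w k) (basis n) n = complex_of_real c * a"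
      using mq_parts(3)[OF M s bop_id l2_basis, of "complex_of_real c"] by (simp add: a_def)
    have cz: "T s (\<lambda>w k. (-1) * y w k) (basis n) n = - z"
      using mq_parts(3)[OF M s y l2_basis, of "-1"] by (simp add: z_def)
    have ep: "T s Pp (basis n) n = complex_of_real c * a + z"
      unfolding Pp_def using mq_parts(2)[OF M s bc y l2_basis] ca by (simp add: z_def)
    have em: "T s Pm (basis n) n = complex_of_real c * a - z"
      unfolding Pm_def using mq_parts(2)[OF M s bc bm l2_basis] ca cz by simp
    have a1: "Im a = 0" "0 \<le> Re a" "Re a \<le> 1" unfolding a_def using Tid_bound[OF r lam M s] by auto
    have p1: "Im (complex_of_real c * a + z) = 0" "0 \<le> Re (complex_of_real c * a + z)"
      using pos_diag[OF Q s bPp oPp, of n] ep by auto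
    have p2: "0 \<le> Re (complex_of_real c * a - z)"
      using pos_diag[OF Q s bPm oPm, of n] em by auto
    have imz: "Im z = 0" using p1(1) a1(1) by simp
    have "\<bar>Re z\<bar> \<le> c * Re a" using p1(2) p2 by simp
    also have "\<dots> \<le> c" using a1 c0 by (simp add: mult_left_le)
    finally show ?thesis using imz by (simp add: z_def[symmetric] cmod_eq_Re)
  qed
  thus ?thesis using c0 by blast
qed

lemma gen_bound:
  assumes r: "r > 0" and lam: "lam > 0" and M: "minimal_qds r lam mu zp zm T" and x: "bop x"
  shows "\<exists>B\<ge>0. \<forall>s\<ge>0. \<forall>n. cmod (T s x (basis n) n) \<le> B"
proof -
  define h where "h = (\<lambda>w k. (1/2) * (x w k + adj x w k))"
  define kk where "kk = (\<lambda>w k. (- \<i> / 2) * (x w k + (-1) * adj x w k))"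
  have ba: "bop (adj x)" by (rule adj_bop[OF x])
  have bh: "bop h" unfolding h_def by (intro bop_opscale bop_opadd x ba)
  have bk: "bop kk" unfolding kk_def by (intro bop_opscale bop_opadd x ba)
  have bik: "bop (\<lambda>w k. \<i> * kk w k)" by (rule bop_opscale[OF bk])
  have sah: "Im (inn u (h u)) = 0" if u: "l2 u" for u
  proof -
    have e1: "inn u (\<lambda>k. (1/2) * (x u k + adj x u k)) = (1/2) * inn u (\<lambda>k. x u k + adj x u k)"
      by (rule inn_scale[OF u l2_add[OF bop_l2[OF x u] bop_l2[OF ba u]]])
    have eq: "inn u (h u) = (1/2) * (inn u (x u) + inn u (adj x u))"
      unfolding h_def e1 inn_add[OF u bop_l2[OF x u] bop_l2[OF ba u]] ..
    show ?thesis unfolding eq adj_self[OF x u] by simp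
  qed
  have sak: "Im (inn u (kk u)) = 0" if u: "l2 u" for u
  proof -
    have e1: "inn u (\<lambda>k. (- \<i> / 2) * (x u k + (-1) * adj x u k)) = (- \<i> / 2) * inn u (\<lambda>k. x u k + (-1) * adj x u k)"
      by (rule inn_scale[OF u l2_add[OF bop_l2[OF x u] l2_scale[OF bop_l2[OF ba u]]]])
    have e2: "inn u (\<lambda>k. (-1) * adj x u k) = (-1) * inn u (adj x u)"
      by (rule inn_scale[OF u bop_l2[OF ba u]])
    have eq: "inn u (kk u) = (- \<i> / 2) * (inn u (x u) + (-1) * inn u (adj x u))"
      unfolding kk_def e1 inn_add[OF u bop_l2[OF x u] l2_scale[OF bop_l2[OF ba u]]] e2 ..
    show ?thesis unfolding eq adj_self[OF x u] by simp
  qed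
  obtain c1 where c1: "c1 \<ge> 0" "\<And>s n. s \<ge> 0 \<Longrightarrow> cmod (T s h (basis n) n) \<le> c1"
    using sa_bound[OF r lam M bh sah] by blast
  obtain c2 where c2: "c2 \<ge> 0" "\<And>s n. s \<ge> 0 \<Longrightarrow> cmod (T s kk (basis n) n) \<le> c2"
    using sa_bound[OF r lam M bk sak] by blast
  have xe: "x = (\<lambda>w k. h w k + \<i> * kk w k)"
    unfolding h_def kk_def by (simp add: fun_eq_iff field_simps)
  have "cmod (T s x (basis n) n) \<le> c1 + c2" if s: "s \<ge> 0" for s n
  proof -
    have "T s x (basis n) n = T s h (basis n) n + \<i> * T s kk (basis n) n"
      using mq_parts(2)[OF M s bh bik l2_basis] mq_parts(3)[OF M s bk l2_basis, of \<i>]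
      by (subst xe) simp
    also have "cmod \<dots> \<le> cmod (T s h (basis n) n) + cmod (\<i> * T s kk (basis n) n)" by (rule norm_triangle_ineq)
    also have "\<dots> \<le> c1 + c2" using c1(2)[OF s, of n] c2(2)[OF s, of n] by (simp add: norm_mult)
    finally show ?thesis .
  qed
  thus ?thesis using c1 c2 by (intro exI[of _ "c1 + c2"]) auto
qed




theorem proposition3p1:
  fixes r lam mu zp zm :: real and T :: "real \<Rightarrow> op \<Rightarrow> op"
  assumes "r > 0" and "0 < lam" and "lam < mu"
    and "minimal_qds r lam mu zp zm T"
  shows "\<forall>t\<ge>0. \<forall>x. bop x \<longrightarrow> tr_rho (lam / mu) (T t x) = tr_rho (lam / mu) x"
proof (intro allI impI)
  fix t :: real and x assume t: "t \<ge> 0" and x: "bop x"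
  have r: "r > 0" and lam: "lam > 0" and M: "minimal_qds r lam mu zp zm T" using assms by auto
  have mu: "mu > 0" using assms by simp
  note Q = mq_parts(1)[OF M]
  define d where "d = (\<lambda>n s. T s x (basis n) n)"
  define A where "A = AA r lam mu"
  define b where "b = (\<lambda>n. mu^2 * omega r n)"
  define c where "c = (\<lambda>n. lam^2 * omega r (Suc n))"
  define G1 where "G1 = (\<lambda>n s. complex_of_real (mu^2 * omega r n * exp (s * A n)) * d (n - 1) s)"
  define G2 where "G2 = (\<lambda>n s. complex_of_real (lam^2 * omega r (Suc n) * exp (s * A n)) * d (Suc n) s)"
  define X where "X = (\<lambda>n. x (basis n) n)"
  have H1: "d n t' = complex_of_real (exp (- t' * A n)) * (X n + integral {0..t'} (G1 n) + integral {0..t'} (G2 n))"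
    if "t' \<in> {0..t}" for n t'
    using diag_eq(3)[OF r Q x, of t' n] that unfolding d_def A_def G1_def G2_def X_def by simp
  have H2a: "G1 n integrable_on {0..t}" for n
    using diag_eq(1)[OF r Q x t, of n] unfolding d_def A_def G1_def by simp
  have H2b: "G2 n integrable_on {0..t}" for n
    using diag_eq(2)[OF r Q x t, of n] unfolding d_def A_def G2_def by simp
  have G1e: "G1 n s = complex_of_real (b n * exp (s * A n)) * d (n - 1) s" for n s by (simp add: G1_def b_def)
  have G2e: "G2 n s = complex_of_real (c n * exp (s * A n)) * d (Suc n) s" for n s by (simp add: G2_def c_def)
  note ode = ode_deriv[OF t G1e G2e H1 H2a H2b]
  have deriv: "(d n has_vector_derivative
            (complex_of_real (- A n) * d n s + complex_of_real (b n) * d (n - 1) s + complex_of_real (c n) * d (Suc n) s))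
            (at s within {0..t})" if "s \<in> {0..t}" for n s
    using ode(1) that by blast
  have d0: "d n 0 = X n" for n using ode(2) by blast
  obtain B where B: "B \<ge> 0" "\<And>s n. s \<ge> 0 \<Longrightarrow> cmod (d n s) \<le> B"
    using gen_bound[OF r lam M x] unfolding d_def by blast
  define \<nu> where "\<nu> = lam / mu"
  have nu0: "0 \<le> \<nu>" and nu1: "\<nu> < 1" using assms mu by (auto simp: \<nu>_def)
  define p where "p = (\<lambda>n. (1 - \<nu>^2) * \<nu>^(2 * n))"
  have p0: "p n \<ge> 0" for n using nu0 nu1 by (auto simp: p_def intro!: mult_nonneg_nonneg simp: power_le_one abs_square_le_1)
  have b0: "b 0 = 0" by (simp add: b_def)
  have nm: "\<nu>^2 * mu^2 = lam^2" using mu by (simp add: \<nu>_def power_divide)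
  have bal: "p (Suc n) * b (Suc n) = p n * c n" for n
  proof -
    have "p (Suc n) * b (Suc n) = (1 - \<nu>^2) * \<nu>^(2 * n) * omega r (Suc n) * (\<nu>^2 * mu^2)"
      by (simp add: p_def b_def power_add mult_ac power2_eq_square)
    also have "\<dots> = p n * c n" by (simp add: nm p_def c_def mult_ac)
    finally show ?thesis .
  qed
  have Abc: "A n = b n + c n" for n by (simp add: A_def AA_def b_def c_def)
  define S where "S = (\<lambda>N s. \<Sum>n<Suc N. complex_of_real (p n) * d n s)"
  have SD: "(S N has_vector_derivative complex_of_real (p N * c N) * (d (Suc N) s - d N s)) (at s within {0..t})"
    if s: "s \<in> {0..t}" for N s
  proof -
    have "(S N has_vector_derivative (\<Sum>n<Suc N. complex_of_real (p n) *
            (complex_of_real (- A n) * d n s + complex_of_real (b n) * d (n - 1) s + complex_of_real (c n) * d (Suc n) s))) (at s within {0..t})"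
      unfolding S_def by (intro has_vector_derivative_sum has_vector_derivative_mult_right deriv[OF s])
    also have "(\<Sum>n<Suc N. complex_of_real (p n) *
            (complex_of_real (- A n) * d n s + complex_of_real (b n) * d (n - 1) s + complex_of_real (c n) * d (Suc n) s))
        = complex_of_real (p N * c N) * (d (Suc N) s - d N s)"
      unfolding Abc using telescope[OF b0 bal, where N=N and D="\<lambda>n. d n s"] by simp
    finally show ?thesis .
  qed
  have bnd: "cmod (S N t - S N 0) \<le> (p N * c N * (2 * B)) * t" for N
  proof -
    have I: "((\<lambda>s. complex_of_real (p N * c N) * (d (Suc N) s - d N s)) has_integral (S N t - S N 0)) {0..t}"
      by (rule fundamental_theorem_of_calculus[OF t SD])
    have pc: "p N * c N \<ge> 0" using p0[of N] omega_nonneg[OF r, of "Suc N"] by (simp add: c_def)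
    have I': "((\<lambda>s. complex_of_real (p N * c N) * (d (Suc N) s - d N s)) has_integral (S N t - S N 0)) (cbox 0 t)"
      using I by (simp only: cbox_interval)
    have bd: "norm (complex_of_real (p N * c N) * (d (Suc N) s - d N s)) \<le> p N * c N * (2 * B)" if "s \<in> cbox 0 t" for s
    proof -
      have s0: "s \<ge> 0" using that by (simp add: cbox_interval)
      have "cmod (d (Suc N) s - d N s) \<le> cmod (d (Suc N) s) + cmod (d N s)" by (rule norm_triangle_ineq4)
      also have "\<dots> \<le> 2 * B" using B(2)[OF s0, of "Suc N"] B(2)[OF s0, of N] by simp
      finally have "cmod (d (Suc N) s - d N s) \<le> 2 * B" .
      hence "(p N * c N) * cmod (d (Suc N) s - d N s) \<le> p N * c N * (2 * B)" using pc by (rule mult_left_mono)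
      moreover have "norm (complex_of_real (p N * c N) * (d (Suc N) s - d N s)) = (p N * c N) * cmod (d (Suc N) s - d N s)"
        by (simp only: norm_mult norm_of_real abs_of_nonneg[OF pc])
      ultimately show ?thesis by simp
    qed
    have "norm (S N t - S N 0) \<le> (p N * c N * (2 * B)) * Henstock_Kurzweil_Integration.content (cbox 0 t)"
      by (rule has_integral_bound[OF _ I' bd]) (use pc B(1) in simp)
    thus ?thesis using t by (simp add: cbox_interval)
  qed
  have lim0: "(\<lambda>N. (p N * c N * (2 * B)) * t) \<longlonglongrightarrow> 0"
  proof -
    have "(\<lambda>N. \<nu> ^ (2 * N) * ((real N + 1) * (real N + r))) \<longlonglongrightarrow> 0" by (rule poly_geom_zero[OF nu0 nu1])
    hence "(\<lambda>N. ((1 - \<nu>^2) * lam^2 * (2 * B) * t) * (\<nu> ^ (2 * N) * ((real N + 1) * (real N + r)))) \<longlonglongrightarrow> ((1 - \<nu>^2) * lam^2 * (2 * B) * t) * 0"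
      by (rule tendsto_mult_left)
    moreover have "((1 - \<nu>^2) * lam^2 * (2 * B) * t) * (\<nu> ^ (2 * N) * ((real N + 1) * (real N + r))) = (p N * c N * (2 * B)) * t" for N
      by (simp add: p_def c_def omega_def mult_ac)
    ultimately show ?thesis by simp
  qed
  have Slim0: "(\<lambda>N. S N t - S N 0) \<longlonglongrightarrow> 0"
    by (rule tendsto_by_bound[OF _ lim0]) (use bnd in simp)
  have sp: "summable p"
  proof -
    have "summable (\<lambda>n. (1 - \<nu>^2) * (\<nu>^2)^n)" using nu0 nu1
      by (intro summable_mult summable_geometric) (simp add: abs_square_less_1)
    thus ?thesis by (simp add: p_def power_mult)
  qed
  have sf: "summable (\<lambda>n. complex_of_real (p n) * d n s)" if "s \<ge> 0" for s
  proof (rule summable_comparison_test'[OF summable_mult[OF sp, of B], where N=0])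
    fix n :: nat
    show "norm (complex_of_real (p n) * d n s) \<le> B * p n"
    proof -
      have "p n * cmod (d n s) \<le> p n * B" using B(2)[OF that, of n] p0[of n] by (rule mult_left_mono)
      thus ?thesis using p0[of n] by (simp add: norm_mult mult.commute)
    qed
  qed
  have Sl: "(\<lambda>N. S N s) \<longlonglongrightarrow> (\<Sum>n. complex_of_real (p n) * d n s)" if "s \<ge> 0" for s
    unfolding S_def by (rule LIMSEQ_Suc[OF summable_LIMSEQ[OF sf[OF that]]])
  have "(\<lambda>N. S N t - S N 0) \<longlonglongrightarrow> (\<Sum>n. complex_of_real (p n) * d n t) - (\<Sum>n. complex_of_real (p n) * d n 0)"
    by (intro tendsto_diff Sl t) simp
  hence eq: "(\<Sum>n. complex_of_real (p n) * d n t) = (\<Sum>n. complex_of_real (p n) * d n 0)"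
    using LIMSEQ_unique[OF _ Slim0] by fastforce
  have "tr_rho (lam / mu) (T t x) = (\<Sum>n. complex_of_real (p n) * d n t)"
    unfolding tr_rho_def inn_basis_left by (simp add: p_def \<nu>_def d_def)
  also have "\<dots> = (\<Sum>n. complex_of_real (p n) * d n 0)" by (rule eq)
  also have "\<dots> = tr_rho (lam / mu) x"
    unfolding tr_rho_def inn_basis_left using d0 by (simp add: p_def \<nu>_def X_def d_def)
  finally show "tr_rho (lam / mu) (T t x) = tr_rho (lam / mu) x" .
qed



end
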